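(* Let $m\ge1$, $\mathbf x=(x_1,\dots,x_{m+1})$, $\mathbf y=(y_1,\dots,y_{m+1})$. If $y_{m+1}=ax_{m+1}$, then \[ Z_{\mathrm{HT}}(2m+1;\mathbf x,\mathbf y)=\prod_{i=1}^m\big[\sigma(a\bar x_iy_{m+1})\,\sigma(a\bar x_{m+1}y_i)\big]\,Z_{\mathrm{HT}}\big(2m;(x_1,\dots,x_m),(y_1,\dots,y_m)\big). \]
   Context: Notation: $\bar z=z^{-1}$, $\sigma(z)=z-z^{-1}$; $a$ is a fixed nonzero parameter. Vertex weights: at a vertex where a horizontal and a vertical line cross, the four incident edges are oriented with exactly two pointing in. Type 1: horizontal edges in, vertical out; type 2: horizontal out, vertical in; type 3: horizontal right, vertical up; type 4: horizontal left, vertical down; type 5: horizontal left, vertical up; type 6: horizontal right, vertical down. A vertex with spectral parameter $z$ has weight $\sigma(a^2)$ (types 1,2), $\sigma(az)$ (types 3,4), $\sigma(a\bar z)$ (types 5,6). A state is an orientation of internal edges satisfying the two-in rule at every vertex; the partition function is the sum over states of the product of vertex weights. Even half-turn model $Z_{\mathrm{HT}}(2m;\mathbf x,\mathbf y)$ ($\mathbf x,\mathbf y$ of length $m$): vertices $(r,j)$, $1\le r\le 2m$ (from the top), $1\le j\le m$ (from the left), vertex $(r,j)$ having parameter $x_{\min(r,2m+1-r)}\bar y_j$; left boundary edges point right, top boundary edges up, bottom boundary edges down; for each $r\le m$ the edges to the right of $(r,m)$ and of $(2m+1-r,m)$ form a single edge (U-turn) with one orientation. Odd half-turn model $Z_{\mathrm{HT}}(2m+1;\mathbf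 x,\mathbf y)$ ($\mathbf x,\mathbf y$ of length $m+1$): vertices $(r,j)$ with $1\le r\le 2m+1$, $1\le j\le m$, and $(r,m+1)$ with $m+2\le r\le 2m+1$; vertex $(r,j)$ has parameter $x_{\min(r,2m+2-r)}\bar y_j$. Edges join consecutive vertices in rows and columns. Left boundary edges point right, top boundary edges of columns $1,\dots,m$ point up, bottom boundary edges of columns $1,\dots,m+1$ point down. The edge to the right of $(m+1,m)$ and the edge above $(m+2,m+1)$ form a single edge, pointing right out of $(m+1,m)$ iff pointing down into $(m+2,m+1)$. For each $r\le m$ the edges to the right of $(r,m)$ and of $(2m+2-r,m+1)$ form a single edge with one orientation (out of one vertex, into the other). *)

theory Defs
  imports Complex_Main
begin

definition sigma :: "complex \<Rightarrow> complex" where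
  "sigma z = z - inverse z"

(* Edges of a lattice: H r j is the horizontal edge to the LEFT of vertex (r,j);
   V r j is the vertical edge ABOVE vertex (r,j).  Rows r counted from the top,
   columns j from the left. *)
datatype edge = H nat nat | V nat nat

(* Local configuration at a vertex: (hL, hR, uT, uB) where
   hL = left edge points right, hR = right edge points right,
   uT = top edge points up,     uB = bottom edge points up. *)
type_synonym vconf = "bool \<times> bool \<times> bool \<times> bool"

(* two-in rule: in-pointing edges are hL, \<not>hR, \<not>uT, uB *)
definition ice :: "vconf \<Rightarrow> bool" where
  "ice c = (case c of (hL, hR, uT, uB) \<Rightarrow>
     length (filter id [hL, \<not> hR, \<not> uT, uB]) = 2)"

(* vertex weight with spectral parameter z:
   types 1,2 (hL \<noteq> hR): sigma(a^2);
   types 3 (right,up), 4 (left,down): sigma(a z);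
   types 5 (left,up), 6 (right,down): sigma(a / z) *)
definition vweight :: "complex \<Rightarrow> complex \<Rightarrow> vconf \<Rightarrow> complex" where
  "vweight a z c = (case c of (hL, hR, uT, uB) \<Rightarrow>
     (if hL \<noteq> hR then sigma (a^2)
      else if hL = uT then sigma (a * z)
      else sigma (a * inverse z)))"

(* Generic partition function: a state is a set S of internal edges (those
   oriented right resp. up), cfg S v gives the configuration at vertex v,
   par v its spectral parameter. *)
definition pfun :: "complex \<Rightarrow> edge set \<Rightarrow> (nat \<times> nat) set
    \<Rightarrow> (edge set \<Rightarrow> nat \<times> nat \<Rightarrow> vconf) \<Rightarrow> (nat \<times> nat \<Rightarrow> complex) \<Rightarrow> complex" where
  "pfun a I Vs cfg par =
     (\<Sum>S \<in> {S. S \<subseteq> I \<and> (\<forall>v\<in>Vs. ice (cfg S v))}. \<Prod>v\<in>Vs. vweight a (par v) (cfg S v))"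

definition ev_hor :: "nat \<Rightarrow> edge set \<Rightarrow> nat \<Rightarrow> nat \<Rightarrow> bool" where
  "ev_hor m S r j =
     (if j = 1 then True
      else if j = m + 1 then (if r \<le> m then H r (m+1) \<in> S else H (2*m+1-r) (m+1) \<notin> S)
      else H r j \<in> S)"

definition ev_ver :: "nat \<Rightarrow> edge set \<Rightarrow> nat \<Rightarrow> nat \<Rightarrow> bool" where
  "ev_ver m S r j =
     (if r = 1 then True else if r = 2*m+1 then False else V r j \<in> S)"

definition ev_internal :: "nat \<Rightarrow> edge set" where
  "ev_internal m =
     {H r j | r j. 1 \<le> r \<and> r \<le> 2*m \<and> 2 \<le> j \<and> j \<le> m}
     \<union> {H r (m+1) | r. 1 \<le> r \<and> r \<le> m}
     \<union> {V r j | r j. 2 \<le> r \<and> r \<le> 2*m \<and> 1 \<le> j \<and> j \<le> m}"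

definition ev_verts :: "nat \<Rightarrow> (nat \<times> nat) set" where
  "ev_verts m = {1..2*m} \<times> {1..m}"

definition Z_HT_even :: "complex \<Rightarrow> nat \<Rightarrow> (nat \<Rightarrow> complex) \<Rightarrow> (nat \<Rightarrow> complex) \<Rightarrow> complex" where
  "Z_HT_even a m x y =
     pfun a (ev_internal m) (ev_verts m)
       (\<lambda>S (r, j). (ev_hor m S r j, ev_hor m S r (j+1), ev_ver m S r j, ev_ver m S (r+1) j))
       (\<lambda>(r, j). x (min r (2*m+1-r)) * inverse (y j))"

definition od_ver :: "nat \<Rightarrow> edge set \<Rightarrow> nat \<Rightarrow> nat \<Rightarrow> bool" where
  "od_ver m S r j =
     (if r = 2*m+2 then False
      else if j \<le> m \<and> r = 1 then True
      else V r j \<in> S)"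

definition od_hor :: "nat \<Rightarrow> edge set \<Rightarrow> nat \<Rightarrow> nat \<Rightarrow> bool" where
  "od_hor m S r j =
     (if j = 1 then True
      else if j \<le> m then H r j \<in> S
      else if j = m + 1 then
        (if r = m + 1 then \<not> od_ver m S (m+2) (m+1) else H r (m+1) \<in> S)
      else H (2*m+2-r) (m+1) \<notin> S)"

definition od_internal :: "nat \<Rightarrow> edge set" where
  "od_internal m =
     {H r j | r j. 1 \<le> r \<and> r \<le> 2*m+1 \<and> 2 \<le> j \<and> j \<le> m}
     \<union> {H r (m+1) | r. 1 \<le> r \<and> r \<le> 2*m+1 \<and> r \<noteq> m+1}
     \<union> {V r j | r j. 2 \<le> r \<and> r \<le> 2*m+1 \<and> 1 \<le> j \<and> j \<le> m}
     \<union> {V r (m+1) | r. m+2 \<le> r \<and> r \<le> 2*m+1}"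

definition od_verts :: "nat \<Rightarrow> (nat \<times> nat) set" where
  "od_verts m = ({1..2*m+1} \<times> {1..m}) \<union> ({m+2..2*m+1} \<times> {m+1})"

definition Z_HT_odd :: "complex \<Rightarrow> nat \<Rightarrow> (nat \<Rightarrow> complex) \<Rightarrow> (nat \<Rightarrow> complex) \<Rightarrow> complex" where
  "Z_HT_odd a m x y =
     pfun a (od_internal m) (od_verts m)
       (\<lambda>S (r, j). (od_hor m S r j, od_hor m S r (j+1), od_ver m S r j, od_ver m S (r+1) j))
       (\<lambda>(r, j). x (min r (2*m+2-r)) * inverse (y j))"

end

theory Submission
  imports Defs
begin

definition wt :: "complex \<Rightarrow> complex \<Rightarrow> vconf \<Rightarrow> complex" where
  "wt a z c = (if ice c then vweight a z c else 0)"

lemma UNIV_bool_sum: "(\<Sum>g\<in>(UNIV::bool set). F g) = F True + F False"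
  by (simp add: UNIV_bool add.commute)

abbreviation bl :: "nat \<Rightarrow> bool list set" where "bl n \<equiv> {s. length s = n}"

lemma finite_bl: "finite (bl n)"
proof -
  have "finite {xs. set xs \<subseteq> (UNIV::bool set) \<and> length xs = n}"
    by (rule finite_lists_length_eq) simp
  then show ?thesis by simp
qed

lemma bl_0: "bl 0 = {[]}" by auto

lemma bl_Suc: "bl (Suc n) = (\<lambda>s. True # s) ` bl n \<union> (\<lambda>s. False # s) ` bl n"
proof -
  have "s \<in> (\<lambda>s. True # s) ` bl n \<union> (\<lambda>s. False # s) ` bl n" if "length s = Suc n" for s
    using that by (cases s) auto
  then show ?thesis by auto
qed

lemma sum_bl_Suc: "(\<Sum>s\<in>bl (Suc n). F s) = (\<Sum>s\<in>bl n. F (True # s)) + (\<Sum>s\<in>bl n. F (False # s))"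
proof -
  have "(\<Sum>s\<in>bl (Suc n). F s) = (\<Sum>s\<in>(\<lambda>s. True # s) ` bl n. F s) + (\<Sum>s\<in>(\<lambda>s. False # s) ` bl n. F s)"
    unfolding bl_Suc by (rule sum.union_disjoint) (auto intro: finite_bl)
  also have "\<dots> = (\<Sum>s\<in>bl n. F (True # s)) + (\<Sum>s\<in>bl n. F (False # s))"
    by (simp add: sum.reindex inj_on_def)
  finally show ?thesis .
qed

lemma sum_bl_0: "(\<Sum>s\<in>bl 0. F s) = F []" by (simp add: bl_0)

fun row :: "complex \<Rightarrow> complex \<Rightarrow> complex list \<Rightarrow> bool \<Rightarrow> bool list \<Rightarrow> bool list \<Rightarrow> bool \<Rightarrow> complex" where
  "row a x [] h ts bs h' = (if h = h' then 1 else 0)"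
| "row a x (y#ys) h ts bs h' = (\<Sum>g\<in>UNIV. wt a (x * inverse y) (h, g, hd ts, hd bs) * row a x ys g (tl ts) (tl bs) h')"

definition Q :: "complex \<Rightarrow> complex \<Rightarrow> complex \<Rightarrow> complex list \<Rightarrow> bool list \<Rightarrow> bool list \<Rightarrow> bool \<Rightarrow> bool \<Rightarrow> bool \<Rightarrow> bool \<Rightarrow> complex" where
  "Q a X p ys ts bs hr fe h g = (\<Sum>s\<in>bl (length ys). row a p ys h ts s hr * row a X ys g s bs fe)"

definition oa :: "complex \<Rightarrow> complex \<Rightarrow> complex \<Rightarrow> complex list \<Rightarrow> bool \<Rightarrow> bool list \<Rightarrow> bool \<Rightarrow> bool list \<Rightarrow> bool \<Rightarrow> bool \<Rightarrow> complex" where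
  "oa a X p ys e ts hl bs hr f = (\<Sum>s\<in>bl (length ys). \<Sum>g\<in>UNIV. \<Sum>h\<in>UNIV.
      row a X ys e ts s g * row a p ys hl s bs h * wt a (p * inverse (a*X)) (h, hr, \<not>g, f))"

lemma Q_Cons: "Q a X p (y#ys) ts bs hr fe h0 g' =
  (\<Sum>s0\<in>UNIV. \<Sum>h\<in>UNIV. \<Sum>g\<in>UNIV. wt a (p * inverse y) (h0, h, hd ts, s0) * wt a (X * inverse y) (g', g, s0, hd bs)
     * Q a X p ys (tl ts) (tl bs) hr fe h g)"
  unfolding Q_def
  by (simp add: sum_bl_Suc UNIV_bool_sum sum.distrib sum_distrib_left sum_distrib_right algebra_simps)

lemma oa_Cons: "oa a X p (y#ys) e ts hl bs hr f =
  (\<Sum>s0\<in>UNIV. \<Sum>e1\<in>UNIV. \<Sum>h1\<in>UNIV. wt a (X * inverse y) (e, e1, hd ts, s0) * wt a (p * inverse y) (hl, h1, s0, hd bs)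
     * oa a X p ys e1 (tl ts) h1 (tl bs) hr f)"
  unfolding oa_def
  by (simp add: sum_bl_Suc UNIV_bool_sum sum.distrib sum_distrib_left sum_distrib_right algebra_simps)

lemma ybe:
  assumes "a \<noteq> 0" "X \<noteq> 0" "p \<noteq> 0" "y \<noteq> 0"
  shows "(\<Sum>s\<in>UNIV. \<Sum>g\<in>UNIV. \<Sum>h\<in>UNIV. wt a (X * inverse y) (e,g,t,s) * wt a (p * inverse y) (hl,h,s,b) * wt a (p * inverse (a*X)) (h,hr,\<not>g,f))
   = (\<Sum>s\<in>UNIV. \<Sum>g\<in>UNIV. \<Sum>h\<in>UNIV. wt a (p * inverse (a*X)) (hl,h,\<not>e,g) * wt a (p * inverse y) (h,hr,t,s) * wt a (X * inverse y) (\<not>g,\<not>f,s,b))"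
  using assms
  apply (cases e; cases t; cases hl; cases b; cases hr; cases f)
  apply (simp_all add: UNIV_bool_sum wt_def ice_def vweight_def)
  apply (simp_all add: sigma_def field_simps power2_eq_square)
  done

lemma one_row:
  assumes "a \<noteq> 0" "X \<noteq> 0" "p \<noteq> 0" "\<forall>y\<in>set ys. y \<noteq> 0"
  shows "oa a X p ys e ts hl bs hr f =
    (\<Sum>g\<in>UNIV. \<Sum>h\<in>UNIV. wt a (p * inverse (a*X)) (hl, h, \<not>e, g) * Q a X p ys ts bs hr (\<not>f) h (\<not>g))"
  using assms(4)
proof (induction ys arbitrary: e ts hl bs)
  case Nil
  then show ?case
    by (cases e; cases hl; cases hr; cases f) (simp_all add: oa_def Q_def sum_bl_0 UNIV_bool_sum)
next
  case (Cons y ys)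
  have y: "y \<noteq> 0" using Cons.prems by simp
  have IH: "\<And>e ts hl bs. oa a X p ys e ts hl bs hr f =
    (\<Sum>g\<in>UNIV. \<Sum>h\<in>UNIV. wt a (p * inverse (a*X)) (hl, h, \<not>e, g) * Q a X p ys ts bs hr (\<not>f) h (\<not>g))"
    using Cons by simp
  define W1 where "W1 = wt a (X * inverse y)"
  define W2 where "W2 = wt a (p * inverse y)"
  define W3 where "W3 = wt a (p * inverse (a*X))"
  define Q' where "Q' = Q a X p ys (tl ts) (tl bs) hr (\<not>f)"
  define t where "t = hd ts"
  define b where "b = hd bs"
  have "oa a X p (y#ys) e ts hl bs hr f =
     (\<Sum>g\<in>UNIV. \<Sum>h\<in>UNIV. (\<Sum>s\<in>UNIV. \<Sum>e1\<in>UNIV. \<Sum>h1\<in>UNIV. W1 (e,e1,t,s) * W2 (hl,h1,s,b) * W3 (h1,h,\<not>e1,g)) * Q' h (\<not>g))"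
    unfolding oa_Cons IH W1_def[symmetric] W2_def[symmetric] W3_def[symmetric] Q'_def[symmetric] t_def[symmetric] b_def[symmetric]
    by (simp add: UNIV_bool_sum algebra_simps)
  also have "\<dots> = (\<Sum>g\<in>UNIV. \<Sum>h\<in>UNIV. (\<Sum>s\<in>UNIV. \<Sum>g0\<in>UNIV. \<Sum>h0\<in>UNIV. W3 (hl,h0,\<not>e,g0) * W2 (h0,h,t,s) * W1 (\<not>g0,\<not>g,s,b)) * Q' h (\<not>g))"
    unfolding W1_def W2_def W3_def using ybe[OF assms(1-3) y] by simp
  also have "\<dots> = (\<Sum>g\<in>UNIV. \<Sum>h\<in>UNIV. wt a (p * inverse (a*X)) (hl, h, \<not>e, g) * Q a X p (y#ys) ts bs hr (\<not>f) h (\<not>g))"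
    unfolding Q_Cons W1_def[symmetric] W2_def[symmetric] W3_def[symmetric] Q'_def[symmetric] t_def[symmetric] b_def[symmetric]
    by (simp add: UNIV_bool_sum algebra_simps)
  finally show ?case .
qed
fun blk :: "complex \<Rightarrow> complex list \<Rightarrow> complex list \<Rightarrow> bool list \<Rightarrow> bool list \<Rightarrow> bool list \<Rightarrow> bool list \<Rightarrow> complex" where
  "blk a [] ys hls ts bs hrs = (if ts = bs then 1 else 0)"
| "blk a (p#ps) ys hls ts bs hrs = (\<Sum>s\<in>bl (length ys). row a p ys (hd hls) ts s (hd hrs) * blk a ps ys (tl hls) s bs (tl hrs))"

fun col :: "complex \<Rightarrow> complex \<Rightarrow> complex list \<Rightarrow> bool \<Rightarrow> bool list \<Rightarrow> bool list \<Rightarrow> bool \<Rightarrow> complex" where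
  "col a Y [] u hls hrs u' = (if u = u' then 1 else 0)"
| "col a Y (p#ps) u hls hrs u' = (\<Sum>g\<in>UNIV. wt a (p * inverse Y) (hd hls, hd hrs, u, g) * col a Y ps g (tl hls) (tl hrs) u')"

lemma mult_if10: "(x::complex) * (if P then 1 else 0) = (if P then x else 0)" "(if P then 1 else 0) * x = (if P then x else 0)"
  by auto

lemma mult_if0: "(if P then c else 0) * (x::complex) = (if P then c * x else 0)" "x * (if P then c else 0) = (if P then x * c else 0)"
  by auto

lemma sum_bl_delta: "length bs = n \<Longrightarrow> (\<Sum>s\<in>bl n. (if s = bs then 1 else 0) * F s) = (F bs :: complex)"
proof -
  assume "length bs = n"
  have "(\<Sum>s\<in>bl n. (if s = bs then 1 else 0) * F s) = (\<Sum>s\<in>bl n. if s = bs then F s else 0)"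
    by (rule sum.cong) auto
  then show ?thesis using \<open>length bs = n\<close> by (simp add: finite_bl)
qed

lemma sum_bl_delta': "length bs = n \<Longrightarrow> (\<Sum>s\<in>bl n. F s * (if bs = s then 1 else 0)) = (F bs :: complex)"
proof -
  assume "length bs = n"
  have "(\<Sum>s\<in>bl n. F s * (if bs = s then 1 else 0)) = (\<Sum>s\<in>bl n. if s = bs then F s else 0)"
    by (rule sum.cong) auto
  then show ?thesis using \<open>length bs = n\<close> by (simp add: finite_bl)
qed

definition BA where
  "BA a X ps ys e ts hls bs hrs f = (\<Sum>s\<in>bl (length ys). \<Sum>g\<in>UNIV. \<Sum>hs\<in>bl (length ps).
     row a X ys e ts s g * blk a ps ys hls s bs hs * col a (a*X) ps (\<not>g) hs hrs f)"

definition BB where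
  "BB a X ps ys e ts hls bs hrs f = (\<Sum>hs\<in>bl (length ps). \<Sum>g\<in>UNIV. \<Sum>s\<in>bl (length ys).
     col a (a*X) ps (\<not>e) hls hs g * blk a ps ys hs ts s hrs * row a X ys (\<not>g) s bs (\<not>f))"

lemma BA_Cons: "BA a X (p#ps) ys e ts hls bs hrs f =
   (\<Sum>s1\<in>bl (length ys). \<Sum>u1\<in>UNIV. oa a X p ys e ts (hd hls) s1 (hd hrs) u1 *
      (\<Sum>hs\<in>bl (length ps). blk a ps ys (tl hls) s1 bs hs * col a (a*X) ps u1 hs (tl hrs) f))"
proof -
  define G where "G = (\<lambda>s hs s1. \<Sum>g\<in>UNIV. \<Sum>h\<in>UNIV. \<Sum>u1\<in>UNIV. row a X ys e ts s g * row a p ys (hd hls) s s1 h *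
      blk a ps ys (tl hls) s1 bs hs * wt a (p * inverse (a*X)) (h, hd hrs, \<not>g, u1) * col a (a*X) ps u1 hs (tl hrs) f)"
  have "BA a X (p#ps) ys e ts hls bs hrs f = (\<Sum>s\<in>bl (length ys). \<Sum>hs\<in>bl (length ps). \<Sum>s1\<in>bl (length ys). G s hs s1)"
    unfolding BA_def G_def
    by (simp add: sum_bl_Suc UNIV_bool_sum sum.distrib sum_distrib_left sum_distrib_right algebra_simps)
  also have "\<dots> = (\<Sum>s\<in>bl (length ys). \<Sum>s1\<in>bl (length ys). \<Sum>hs\<in>bl (length ps). G s hs s1)"
    by (rule sum.cong[OF refl], rule sum.swap)
  also have "\<dots> = (\<Sum>s1\<in>bl (length ys). \<Sum>s\<in>bl (length ys). \<Sum>hs\<in>bl (length ps). G s hs s1)"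
    by (rule sum.swap)
  also have "\<dots> = (\<Sum>s1\<in>bl (length ys). \<Sum>u1\<in>UNIV. oa a X p ys e ts (hd hls) s1 (hd hrs) u1 *
      (\<Sum>hs\<in>bl (length ps). blk a ps ys (tl hls) s1 bs hs * col a (a*X) ps u1 hs (tl hrs) f))"
    unfolding oa_def G_def
    by (simp add: UNIV_bool_sum sum.distrib sum_distrib_left sum_distrib_right algebra_simps)
  finally show ?thesis .
qed

lemma BA_Cons2:
  assumes "a \<noteq> 0" "X \<noteq> 0" "p \<noteq> 0" "\<forall>y\<in>set ys. y \<noteq> 0"
  shows "BA a X (p#ps) ys e ts hls bs hrs f =
   (\<Sum>g\<in>UNIV. \<Sum>h\<in>UNIV. \<Sum>s\<in>bl (length ys). wt a (p * inverse (a*X)) (hd hls, h, \<not>e, g) *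
      row a p ys h ts s (hd hrs) * BA a X ps ys (\<not>g) s (tl hls) bs (tl hrs) f)"
proof -
  define G where "G = (\<lambda>s1 s. \<Sum>u1\<in>UNIV. \<Sum>g\<in>UNIV. \<Sum>h\<in>UNIV. \<Sum>hs\<in>bl (length ps).
      wt a (p * inverse (a*X)) (hd hls, h, \<not>e, g) * row a p ys h ts s (hd hrs) * row a X ys (\<not>g) s s1 (\<not>u1) *
      blk a ps ys (tl hls) s1 bs hs * col a (a*X) ps u1 hs (tl hrs) f)"
  have "BA a X (p#ps) ys e ts hls bs hrs f = (\<Sum>s1\<in>bl (length ys). \<Sum>s\<in>bl (length ys). G s1 s)"
    unfolding BA_Cons one_row[OF assms] Q_def G_def
    by (simp add: UNIV_bool_sum sum.distrib sum_distrib_left sum_distrib_right algebra_simps)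
  also have "\<dots> = (\<Sum>s\<in>bl (length ys). \<Sum>s1\<in>bl (length ys). G s1 s)"
    by (rule sum.swap)
  also have "\<dots> = (\<Sum>g\<in>UNIV. \<Sum>h\<in>UNIV. \<Sum>s\<in>bl (length ys). wt a (p * inverse (a*X)) (hd hls, h, \<not>e, g) *
      row a p ys h ts s (hd hrs) * BA a X ps ys (\<not>g) s (tl hls) bs (tl hrs) f)"
    unfolding BA_def G_def
    by (simp add: UNIV_bool_sum sum.distrib sum_distrib_left sum_distrib_right algebra_simps)
  finally show ?thesis .
qed

lemma BB_Cons: "BB a X (p#ps) ys e ts hls bs hrs f =
   (\<Sum>g\<in>UNIV. \<Sum>h\<in>UNIV. \<Sum>s\<in>bl (length ys). wt a (p * inverse (a*X)) (hd hls, h, \<not>e, g) *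
      row a p ys h ts s (hd hrs) * BB a X ps ys (\<not>g) s (tl hls) bs (tl hrs) f)"
proof -
  define G where "G = (\<lambda>hs s2 s. \<Sum>g\<in>UNIV. \<Sum>h\<in>UNIV. \<Sum>g2\<in>UNIV. 
      wt a (p * inverse (a*X)) (hd hls, h, \<not>e, g) * row a p ys h ts s (hd hrs) * col a (a*X) ps g (tl hls) hs g2 *
      blk a ps ys hs s s2 (tl hrs) * row a X ys (\<not>g2) s2 bs (\<not>f))"
  have "BB a X (p#ps) ys e ts hls bs hrs f = (\<Sum>hs\<in>bl (length ps). \<Sum>s2\<in>bl (length ys). \<Sum>s\<in>bl (length ys). G hs s2 s)"
    unfolding BB_def G_def
    by (simp add: sum_bl_Suc UNIV_bool_sum sum.distrib sum_distrib_left sum_distrib_right algebra_simps)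
  also have "\<dots> = (\<Sum>hs\<in>bl (length ps). \<Sum>s\<in>bl (length ys). \<Sum>s2\<in>bl (length ys). G hs s2 s)"
    by (rule sum.cong[OF refl], rule sum.swap)
  also have "\<dots> = (\<Sum>s\<in>bl (length ys). \<Sum>hs\<in>bl (length ps). \<Sum>s2\<in>bl (length ys). G hs s2 s)"
    by (rule sum.swap)
  also have "\<dots> = (\<Sum>g\<in>UNIV. \<Sum>h\<in>UNIV. \<Sum>s\<in>bl (length ys). wt a (p * inverse (a*X)) (hd hls, h, \<not>e, g) *
      row a p ys h ts s (hd hrs) * BB a X ps ys (\<not>g) s (tl hls) bs (tl hrs) f)"
    unfolding BB_def G_def
    by (simp add: UNIV_bool_sum sum.distrib sum_distrib_left sum_distrib_right algebra_simps)
  finally show ?thesis .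
qed

lemma BA_BB:
  assumes "a \<noteq> 0" "X \<noteq> 0" "\<forall>p\<in>set ps. p \<noteq> 0" "\<forall>y\<in>set ys. y \<noteq> 0"
    and "length ts = length ys" "length bs = length ys"
  shows "BA a X ps ys e ts hls bs hrs f = BB a X ps ys e ts hls bs hrs f"
  using assms(3,5)
proof (induction ps arbitrary: e ts hls hrs)
  case Nil
  have "BA a X [] ys e ts hls bs hrs f = row a X ys e ts bs (\<not>f)"
    unfolding BA_def using assms(6)
    by (cases f) (simp_all add: sum_bl_0 UNIV_bool_sum sum.distrib mult_if10 sum.delta sum.delta' finite_bl)
  moreover have "BB a X [] ys e ts hls bs hrs f = row a X ys e ts bs (\<not>f)"
    unfolding BB_def using Nil.prems(2)
    by (cases e) (simp_all add: sum_bl_0 UNIV_bool_sum sum.distrib mult_if10 sum.delta sum.delta' finite_bl)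
  ultimately show ?case by simp
next
  case (Cons p ps)
  have p: "p \<noteq> 0" using Cons.prems by simp
  have "BA a X (p#ps) ys e ts hls bs hrs f =
   (\<Sum>g\<in>UNIV. \<Sum>h\<in>UNIV. \<Sum>s\<in>bl (length ys). wt a (p * inverse (a*X)) (hd hls, h, \<not>e, g) *
      row a p ys h ts s (hd hrs) * BA a X ps ys (\<not>g) s (tl hls) bs (tl hrs) f)"
    by (rule BA_Cons2[OF assms(1,2) p assms(4)])
  also have "\<dots> = (\<Sum>g\<in>UNIV. \<Sum>h\<in>UNIV. \<Sum>s\<in>bl (length ys). wt a (p * inverse (a*X)) (hd hls, h, \<not>e, g) *
      row a p ys h ts s (hd hrs) * BB a X ps ys (\<not>g) s (tl hls) bs (tl hrs) f)"
    using Cons by (intro sum.cong refl) simp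
  also have "\<dots> = BB a X (p#ps) ys e ts hls bs hrs f" by (rule BB_Cons[symmetric])
  finally show ?case .
qed

lemma col_freeze:
  "length hs = length ps \<Longrightarrow> col a Y ps False (replicate (length ps) True) hs g =
     (if hs = replicate (length ps) True \<and> g = False then (\<Prod>p\<leftarrow>ps. sigma (a * inverse (p * inverse Y))) else 0)"
proof (induction ps arbitrary: hs)
  case Nil
  then show ?case by (cases g) auto
next
  case (Cons p ps)
  then obtain h hs' where hs: "hs = h # hs'" "length hs' = length ps" by (cases hs) auto
  show ?case
    using Cons.IH[OF hs(2)] unfolding hs(1)
    by (cases h) (simp_all add: UNIV_bool_sum wt_def ice_def vweight_def)
qed

lemma row_false:
  "length s = length ys \<Longrightarrow> row a X ys False s (replicate (length ys) False) True = 0"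
proof (induction ys arbitrary: s)
  case Nil
  then show ?case by simp
next
  case (Cons y ys)
  then obtain t s' where s: "s = t # s'" "length s' = length ys" by (cases s) auto
  show ?case
    using Cons.IH[OF s(2)] unfolding s(1)
    by (cases t) (simp_all add: UNIV_bool_sum wt_def ice_def vweight_def)
qed

lemma row_freeze:
  "length s = length ys \<Longrightarrow> row a X ys True s (replicate (length ys) False) True =
     (if s = replicate (length ys) False then (\<Prod>y\<leftarrow>ys. sigma (a * inverse (X * inverse y))) else 0)"
proof (induction ys arbitrary: s)
  case Nil
  then show ?case by simp
next
  case (Cons y ys)
  then obtain t s' where s: "s = t # s'" "length s' = length ys" by (cases s) auto
  show ?case
    using Cons.IH[OF s(2)] row_false[OF s(2)] unfolding s(1)
    by (cases t) (simp_all add: UNIV_bool_sum wt_def ice_def vweight_def)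
qed

lemma list_main:
  assumes "a \<noteq> 0" "X \<noteq> 0" "\<forall>p\<in>set ps. p \<noteq> 0" "\<forall>y\<in>set ys. y \<noteq> 0"
    and "length ts = length ys"
  shows "(\<Sum>hs\<in>bl (length ps). \<Sum>g\<in>UNIV. blk a (X#ps) ys (True # replicate (length ps) True) ts (replicate (length ys) False) (g#hs)
           * col a (a*X) ps (\<not>g) hs \<rho> False)
    = (\<Prod>p\<leftarrow>ps. sigma (a * inverse (p * inverse (a*X)))) * (\<Prod>y\<leftarrow>ys. sigma (a * inverse (X * inverse y)))
       * blk a ps ys (replicate (length ps) True) ts (replicate (length ys) False) \<rho>"
proof -
  let ?T = "replicate (length ps) True" and ?F = "replicate (length ys) False"
  define G where "G = (\<lambda>hs g s. row a X ys True ts s g * blk a ps ys ?T s ?F hs * col a (a*X) ps (\<not>g) hs \<rho> False)"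
  have "(\<Sum>hs\<in>bl (length ps). \<Sum>g\<in>UNIV. blk a (X#ps) ys (True # ?T) ts ?F (g#hs) * col a (a*X) ps (\<not>g) hs \<rho> False)
     = (\<Sum>hs\<in>bl (length ps). \<Sum>g\<in>UNIV. \<Sum>s\<in>bl (length ys). G hs g s)"
    unfolding G_def by (simp add: sum_distrib_right)
  also have "\<dots> = (\<Sum>hs\<in>bl (length ps). \<Sum>s\<in>bl (length ys). \<Sum>g\<in>UNIV. G hs g s)"
    by (rule sum.cong[OF refl], rule sum.swap)
  also have "\<dots> = (\<Sum>s\<in>bl (length ys). \<Sum>hs\<in>bl (length ps). \<Sum>g\<in>UNIV. G hs g s)"
    by (rule sum.swap)
  also have "\<dots> = (\<Sum>s\<in>bl (length ys). \<Sum>g\<in>UNIV. \<Sum>hs\<in>bl (length ps). G hs g s)"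
    by (rule sum.cong[OF refl], rule sum.swap)
  also have "\<dots> = BA a X ps ys True ts ?T ?F \<rho> False"
    unfolding BA_def G_def by simp
  also have "\<dots> = BB a X ps ys True ts ?T ?F \<rho> False"
    by (rule BA_BB) (use assms in auto)
  also have "\<dots> = (\<Sum>hs\<in>bl (length ps). \<Sum>g\<in>UNIV. \<Sum>s\<in>bl (length ys).
     (if hs = ?T \<and> g = False then (\<Prod>p\<leftarrow>ps. sigma (a * inverse (p * inverse (a*X)))) else 0) * blk a ps ys hs ts s \<rho> *
     (if s = ?F then (\<Prod>y\<leftarrow>ys. sigma (a * inverse (X * inverse y))) else 0))"
    unfolding BB_def
    by (intro sum.cong refl) (simp add: col_freeze row_freeze)
  also have "\<dots> = (\<Sum>hs\<in>bl (length ps). if hs = ?T then (\<Sum>s\<in>bl (length ys). if s = ?F then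
     (\<Prod>p\<leftarrow>ps. sigma (a * inverse (p * inverse (a*X)))) * (\<Prod>y\<leftarrow>ys. sigma (a * inverse (X * inverse y)))
       * blk a ps ys hs ts s \<rho> else 0) else 0)"
    by (intro sum.cong refl) (auto simp: UNIV_bool_sum intro!: sum.cong)
  also have "\<dots> = (\<Prod>p\<leftarrow>ps. sigma (a * inverse (p * inverse (a*X)))) * (\<Prod>y\<leftarrow>ys. sigma (a * inverse (X * inverse y)))
       * blk a ps ys ?T ts ?F \<rho>"
    by (simp add: sum.delta finite_bl)
  finally show ?thesis .
qed



lemma sum_Pow_Un:
  assumes "finite A" "finite B" "A \<inter> B = {}"
  shows "(\<Sum>S\<in>Pow (A \<union> B). f S) = (\<Sum>S1\<in>Pow A. \<Sum>S2\<in>Pow B. f (S1 \<union> S2))"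
proof -
  have bij: "bij_betw (\<lambda>(S1,S2). S1 \<union> S2) (Pow A \<times> Pow B) (Pow (A \<union> B))"
    by (rule bij_betw_byWitness[where f' = "\<lambda>S. (S \<inter> A, S \<inter> B)"]) (use assms(3) in auto)
  have "(\<Sum>S\<in>Pow (A \<union> B). f S) = (\<Sum>x\<in>Pow A \<times> Pow B. f (case x of (S1,S2) \<Rightarrow> S1 \<union> S2))"
    using sum.reindex_bij_betw[OF bij, of f] by simp
  also have "\<dots> = (\<Sum>S1\<in>Pow A. \<Sum>S2\<in>Pow B. f (S1 \<union> S2))"
    by (simp add: sum.cartesian_product split_def)
  finally show ?thesis .
qed

lemma sum_Pow_insert:
  assumes "finite B" "e \<notin> B"
  shows "(\<Sum>S\<in>Pow (insert e B). f S) = (\<Sum>S\<in>Pow B. f S + f (insert e S))"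
proof -
  have "(\<Sum>S\<in>Pow (insert e B). f S) = (\<Sum>S\<in>Pow ({e} \<union> B). f S)" by simp
  also have "\<dots> = (\<Sum>S1\<in>Pow {e}. \<Sum>S2\<in>Pow B. f (S1 \<union> S2))"
    by (rule sum_Pow_Un) (use assms in auto)
  also have "\<dots> = (\<Sum>S\<in>Pow B. f S + f (insert e S))"
    proof -
      have "Pow {e} = {{}, {e}}" by blast
      then show ?thesis using assms by (simp add: sum.distrib)
    qed
  finally show ?thesis .
qed

lemma sum_pow_list:
  "inj_on e {..<n} \<Longrightarrow> (\<Sum>S\<in>Pow (e ` {..<n}). G S) = (\<Sum>s\<in>bl n. G (e ` {i. i < n \<and> s!i}))"
proof (induction n arbitrary: e G)
  case 0
  then show ?case by (simp add: sum_bl_0)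
next
  case (Suc n)
  define e' where "e' = (\<lambda>i. e (Suc i))"
  have inj': "inj_on e' {..<n}" using Suc.prems unfolding e'_def inj_on_def by auto
  have img: "e ` {..<Suc n} = insert (e 0) (e' ` {..<n})"
    unfolding e'_def by (auto simp: lessThan_Suc_eq_insert_0)
  have notin: "e 0 \<notin> e' ` {..<n}"
    using Suc.prems unfolding e'_def inj_on_def by auto
  have set_b: "{i. i < Suc n \<and> (b # s) ! i} = (if b then {0} else {}) \<union> Suc ` {i. i < n \<and> s ! i}" for b s
  proof (rule set_eqI)
    fix i show "i \<in> {i. i < Suc n \<and> (b # s) ! i} \<longleftrightarrow> i \<in> (if b then {0} else {}) \<union> Suc ` {i. i < n \<and> s ! i}"
      by (cases i) auto
  qed
  have s1: "e ` {i. i < Suc n \<and> (True # s) ! i} = insert (e 0) (e' ` {i. i < n \<and> s ! i})" for s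
    unfolding set_b e'_def by auto
  have s2: "e ` {i. i < Suc n \<and> (False # s) ! i} = e' ` {i. i < n \<and> s ! i}" for s
    unfolding set_b e'_def by auto
  show ?case
    unfolding img sum_Pow_insert[OF finite_imageI[OF finite_lessThan] notin] sum.distrib
      Suc.IH[OF inj'] sum_bl_Suc s1 s2 by (simp add: add.commute)
qed



definition gint :: "nat \<Rightarrow> nat \<Rightarrow> nat \<Rightarrow> nat \<Rightarrow> edge set" where
  "gint r0 k c0 n = {H r j | r j. r0 \<le> r \<and> r < r0 + k \<and> Suc c0 < j \<and> j \<le> c0 + n}
     \<union> {V r j | r j. r0 < r \<and> r < r0 + k \<and> c0 < j \<and> j \<le> c0 + n}"

definition gh :: "nat \<Rightarrow> nat \<Rightarrow> (nat \<Rightarrow> bool) \<Rightarrow> (nat \<Rightarrow> bool) \<Rightarrow> edge set \<Rightarrow> nat \<Rightarrow> nat \<Rightarrow> bool" where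
  "gh c0 n lf rt S r j = (if j = Suc c0 then lf r else if j = Suc (c0 + n) then rt r else H r j \<in> S)"

definition gv :: "nat \<Rightarrow> nat \<Rightarrow> (nat \<Rightarrow> bool) \<Rightarrow> (nat \<Rightarrow> bool) \<Rightarrow> edge set \<Rightarrow> nat \<Rightarrow> nat \<Rightarrow> bool" where
  "gv r0 k tp bt S r j = (if r = r0 then tp j else if r = r0 + k then bt j else V r j \<in> S)"

definition gw where
  "gw a r0 k c0 n lf rt tp bt px py S r j =
     wt a (px r * inverse (py j)) (gh c0 n lf rt S r j, gh c0 n lf rt S r (Suc j), gv r0 k tp bt S r j, gv r0 k tp bt S (Suc r) j)"

definition GB where
  "GB a r0 k c0 n lf rt tp bt px py =
     (\<Sum>S\<in>Pow (gint r0 k c0 n). \<Prod>r\<in>{r0..<r0+k}. \<Prod>j\<in>{c0<..c0+n}. gw a r0 k c0 n lf rt tp bt px py S r j)"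

lemma finite_gint: "finite (gint r0 k c0 n)"
proof -
  have "gint r0 k c0 n \<subseteq> (\<lambda>(r,j). H r j) ` ({r0..<r0+k} \<times> {..c0+n}) \<union> (\<lambda>(r,j). V r j) ` ({r0..<r0+k} \<times> {..c0+n})"
    unfolding gint_def by auto
  then show ?thesis by (rule finite_subset) auto
qed

lemma GB_cong:
  assumes "\<And>r. r0 \<le> r \<Longrightarrow> r < r0 + k \<Longrightarrow> lf r = lf' r \<and> rt r = rt' r"
    and "\<And>j. c0 < j \<Longrightarrow> j \<le> c0 + n \<Longrightarrow> tp j = tp' j \<and> bt j = bt' j"
  shows "GB a r0 k c0 n lf rt tp bt px py = GB a r0 k c0 n lf' rt' tp' bt' px py"
  unfolding GB_def
proof (intro sum.cong prod.cong refl)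
  fix S r j assume "r \<in> {r0..<r0+k}" "j \<in> {c0<..c0+n}"
  then show "gw a r0 k c0 n lf rt tp bt px py S r j = gw a r0 k c0 n lf' rt' tp' bt' px py S r j"
    using assms[of r] assms[of j] unfolding gw_def gh_def gv_def by auto
qed

lemma GB_row:
  assumes "n \<ge> 1"
  shows "GB a r0 1 c0 n lf rt tp bt px py =
    row a (px r0) (map py [Suc c0..<Suc (c0+n)]) (lf r0) (map tp [Suc c0..<Suc (c0+n)]) (map bt [Suc c0..<Suc (c0+n)]) (rt r0)"
  using assms
proof (induction n arbitrary: c0 lf rule: nat_induct_at_least)
  case base
  have "gint r0 1 c0 1 = {}" unfolding gint_def by auto
  moreover have "{c0<..c0 + 1} = {Suc c0}" by auto
  ultimately show ?case
    unfolding GB_def gw_def gh_def gv_def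
    by (simp add: UNIV_bool_sum mult_if10)
next
  case (Suc n)
  define e where "e = H r0 (Suc (Suc c0))"
  have gi: "gint r0 1 c0 (Suc n) = insert e (gint r0 1 (Suc c0) n)"
    unfolding gint_def e_def using Suc.hyps by auto
  have enot: "e \<notin> gint r0 1 (Suc c0) n" unfolding gint_def e_def by auto
  have ivl: "{c0<..c0 + Suc n} = insert (Suc c0) {Suc c0<..Suc c0 + n}" by auto
  have first: "gw a r0 1 c0 (Suc n) lf rt tp bt px py S' r0 (Suc c0) =
      wt a (px r0 * inverse (py (Suc c0))) (lf r0, e \<in> S', tp (Suc c0), bt (Suc c0))" for S'
    unfolding gw_def gh_def gv_def e_def using Suc.hyps by auto
  have rest: "gw a r0 1 c0 (Suc n) lf rt tp bt px py S' r0 j =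
      gw a r0 1 (Suc c0) n (\<lambda>_. e \<in> S') rt tp bt px py S r0 j"
    if "j \<in> {Suc c0<..Suc c0 + n}" "S \<subseteq> gint r0 1 (Suc c0) n" "S' = S \<or> S' = insert e S" for S S' j
    using that enot unfolding gw_def gh_def gv_def e_def by auto
  have "GB a r0 1 c0 (Suc n) lf rt tp bt px py =
     (\<Sum>S\<in>Pow (gint r0 1 (Suc c0) n).
        wt a (px r0 * inverse (py (Suc c0))) (lf r0, False, tp (Suc c0), bt (Suc c0)) *
          (\<Prod>j\<in>{Suc c0<..Suc c0 + n}. gw a r0 1 (Suc c0) n (\<lambda>_. False) rt tp bt px py S r0 j)
      + wt a (px r0 * inverse (py (Suc c0))) (lf r0, True, tp (Suc c0), bt (Suc c0)) *
          (\<Prod>j\<in>{Suc c0<..Suc c0 + n}. gw a r0 1 (Suc c0) n (\<lambda>_. True) rt tp bt px py S r0 j))"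
    unfolding GB_def gi sum_Pow_insert[OF finite_gint enot]
  proof (intro sum.cong refl)
    fix S assume S: "S \<in> Pow (gint r0 1 (Suc c0) n)"
    have eS: "e \<notin> S" using S enot by auto
    show "(\<Prod>r\<in>{r0..<r0 + 1}. \<Prod>j\<in>{c0<..c0 + Suc n}. gw a r0 1 c0 (Suc n) lf rt tp bt px py S r j) +
          (\<Prod>r\<in>{r0..<r0 + 1}. \<Prod>j\<in>{c0<..c0 + Suc n}. gw a r0 1 c0 (Suc n) lf rt tp bt px py (insert e S) r j) =
        wt a (px r0 * inverse (py (Suc c0))) (lf r0, False, tp (Suc c0), bt (Suc c0)) *
          (\<Prod>j\<in>{Suc c0<..Suc c0 + n}. gw a r0 1 (Suc c0) n (\<lambda>_. False) rt tp bt px py S r0 j)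
      + wt a (px r0 * inverse (py (Suc c0))) (lf r0, True, tp (Suc c0), bt (Suc c0)) *
          (\<Prod>j\<in>{Suc c0<..Suc c0 + n}. gw a r0 1 (Suc c0) n (\<lambda>_. True) rt tp bt px py S r0 j)"
    proof -
      have f1: "gw a r0 1 c0 (Suc n) lf rt tp bt px py S r0 (Suc c0) = wt a (px r0 * inverse (py (Suc c0))) (lf r0, False, tp (Suc c0), bt (Suc c0))"
        using first[of S] eS by simp
      have f2: "gw a r0 1 c0 (Suc n) lf rt tp bt px py (insert e S) r0 (Suc c0) = wt a (px r0 * inverse (py (Suc c0))) (lf r0, True, tp (Suc c0), bt (Suc c0))"
        using first[of "insert e S"] by simp
      have p1: "(\<Prod>j\<in>{Suc c0<..Suc c0 + n}. gw a r0 1 c0 (Suc n) lf rt tp bt px py S r0 j) =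
          (\<Prod>j\<in>{Suc c0<..Suc c0 + n}. gw a r0 1 (Suc c0) n (\<lambda>_. False) rt tp bt px py S r0 j)"
        using rest[of _ S S] S eS by (intro prod.cong refl) auto
      have p2: "(\<Prod>j\<in>{Suc c0<..Suc c0 + n}. gw a r0 1 c0 (Suc n) lf rt tp bt px py (insert e S) r0 j) =
          (\<Prod>j\<in>{Suc c0<..Suc c0 + n}. gw a r0 1 (Suc c0) n (\<lambda>_. True) rt tp bt px py S r0 j)"
        using rest[of _ S "insert e S"] S by (intro prod.cong refl) auto
      have fin: "finite {Suc c0<..Suc c0 + n}" by simp
      have nin: "Suc c0 \<notin> {Suc c0<..Suc c0 + n}" by simp
      have r1: "{r0..<r0 + 1} = {r0}" by auto
      have ps1: "(\<Prod>r\<in>{r0}. G r) = G r0" for G :: "nat \<Rightarrow> complex" by simp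
      show ?thesis
        by (simp only: r1 ps1 ivl prod.insert[OF fin nin] f1 f2 p1 p2)
    qed
  qed
  also have "\<dots> = wt a (px r0 * inverse (py (Suc c0))) (lf r0, False, tp (Suc c0), bt (Suc c0)) * GB a r0 1 (Suc c0) n (\<lambda>_. False) rt tp bt px py
      + wt a (px r0 * inverse (py (Suc c0))) (lf r0, True, tp (Suc c0), bt (Suc c0)) * GB a r0 1 (Suc c0) n (\<lambda>_. True) rt tp bt px py"
    unfolding GB_def by (simp add: sum.distrib sum_distrib_left)
  also have "\<dots> = row a (px r0) (map py [Suc c0..<Suc (c0 + Suc n)]) (lf r0) (map tp [Suc c0..<Suc (c0 + Suc n)])
      (map bt [Suc c0..<Suc (c0 + Suc n)]) (rt r0)"
  proof -
    have L: "[Suc c0..<Suc (c0 + Suc n)] = Suc c0 # [Suc (Suc c0)..<Suc (Suc c0 + n)]" by (simp add: upt_conv_Cons)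
    show ?thesis unfolding L list.map row.simps list.sel Suc.IH UNIV_bool_sum by (simp add: add.commute)
  qed
  finally show ?case .
qed



lemma GB_peel:
  assumes k: "k \<ge> 1"
  shows "GB a r0 (Suc k) c0 n lf rt tp bt px py =
    (\<Sum>s\<in>bl n. GB a r0 1 c0 n lf rt tp (\<lambda>j. s!(j - Suc c0)) px py * GB a (Suc r0) k c0 n lf rt (\<lambda>j. s!(j - Suc c0)) bt px py)"
proof -
  define A where "A = gint r0 1 c0 n"
  define e where "e = (\<lambda>i. V (Suc r0) (Suc c0 + i))"
  define VE where "VE = e ` {..<n}"
  define C where "C = gint (Suc r0) k c0 n"
  define chi where "chi = (\<lambda>S2 j. V (Suc r0) j \<in> S2)"
  have VE_alt: "VE = {V (Suc r0) j | j. c0 < j \<and> j \<le> c0 + n}"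
  proof (rule set_eqI)
    fix x
    show "x \<in> VE \<longleftrightarrow> x \<in> {V (Suc r0) j | j. c0 < j \<and> j \<le> c0 + n}"
    proof
      assume "x \<in> VE" then show "x \<in> {V (Suc r0) j | j. c0 < j \<and> j \<le> c0 + n}"
        unfolding VE_def e_def by auto
    next
      assume "x \<in> {V (Suc r0) j | j. c0 < j \<and> j \<le> c0 + n}"
      then obtain j where j: "x = V (Suc r0) j" "c0 < j" "j \<le> c0 + n" by auto
      then have "x = e (j - Suc c0)" "j - Suc c0 < n" unfolding e_def by auto
      then show "x \<in> VE" unfolding VE_def by auto
    qed
  qed
  have split: "gint r0 (Suc k) c0 n = A \<union> (VE \<union> C)"
    unfolding A_def C_def VE_alt gint_def using k by auto
  have d1: "A \<inter> (VE \<union> C) = {}" unfolding A_def C_def VE_alt gint_def by auto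
  have d2: "VE \<inter> C = {}" unfolding C_def VE_alt gint_def by auto
  have fA: "finite A" and fC: "finite C" and fVE: "finite VE"
    unfolding A_def C_def VE_def by (auto intro: finite_gint)
  have rows: "{r0..<r0 + Suc k} = insert r0 {Suc r0..<Suc r0 + k}" by auto
  have r0nin: "r0 \<notin> {Suc r0..<Suc r0 + k}" by simp
  have gw_row: "gw a r0 (Suc k) c0 n lf rt tp bt px py (S1 \<union> (S2 \<union> S3)) r0 j =
      gw a r0 1 c0 n lf rt tp (chi S2) px py S1 r0 j"
    if "S1 \<subseteq> A" "S2 \<subseteq> VE" "S3 \<subseteq> C" for S1 S2 S3 j
  proof -
    have "H r0 j' \<in> S1 \<union> (S2 \<union> S3) \<longleftrightarrow> H r0 j' \<in> S1" for j'
      using that unfolding VE_alt C_def gint_def by auto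
    moreover have "V (Suc r0) j \<in> S1 \<union> (S2 \<union> S3) \<longleftrightarrow> V (Suc r0) j \<in> S2"
      using that unfolding A_def C_def gint_def by auto
    ultimately show ?thesis using k unfolding gw_def gh_def gv_def chi_def by simp
  qed
  have gw_rest: "gw a r0 (Suc k) c0 n lf rt tp bt px py (S1 \<union> (S2 \<union> S3)) r j =
      gw a (Suc r0) k c0 n lf rt (chi S2) bt px py S3 r j"
    if "S1 \<subseteq> A" "S2 \<subseteq> VE" "S3 \<subseteq> C" "r \<in> {Suc r0..<Suc r0 + k}" for S1 S2 S3 r j
  proof -
    have "H r j' \<in> S1 \<union> (S2 \<union> S3) \<longleftrightarrow> H r j' \<in> S3" for j'
      using that unfolding VE_alt A_def gint_def by auto
    moreover have "V r j \<in> S1 \<union> (S2 \<union> S3) \<longleftrightarrow> (if r = Suc r0 then V r j \<in> S2 else V r j \<in> S3)"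
      using that unfolding A_def C_def VE_alt gint_def by auto
    moreover have "V (Suc r) j \<in> S1 \<union> (S2 \<union> S3) \<longleftrightarrow> V (Suc r) j \<in> S3"
      using that unfolding A_def VE_alt gint_def by auto
    ultimately show ?thesis using that(4) unfolding gw_def gh_def gv_def chi_def by auto
  qed
  define RowP where "RowP = (\<lambda>S2 S1. \<Prod>j\<in>{c0<..c0+n}. gw a r0 1 c0 n lf rt tp (chi S2) px py S1 r0 j)"
  define RestP where "RestP = (\<lambda>S2 S3. \<Prod>r\<in>{Suc r0..<Suc r0 + k}. \<Prod>j\<in>{c0<..c0+n}. gw a (Suc r0) k c0 n lf rt (chi S2) bt px py S3 r j)"
  have "GB a r0 (Suc k) c0 n lf rt tp bt px py =
     (\<Sum>S1\<in>Pow A. \<Sum>S2\<in>Pow VE. \<Sum>S3\<in>Pow C. RowP S2 S1 * RestP S2 S3)"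
    unfolding GB_def split sum_Pow_Un[OF fA finite_UnI[OF fVE fC] d1] sum_Pow_Un[OF fVE fC d2]
  proof (intro sum.cong refl)
    fix S1 S2 S3 assume S: "S1 \<in> Pow A" "S2 \<in> Pow VE" "S3 \<in> Pow C"
    show "(\<Prod>r\<in>{r0..<r0 + Suc k}. \<Prod>j\<in>{c0<..c0 + n}. gw a r0 (Suc k) c0 n lf rt tp bt px py (S1 \<union> (S2 \<union> S3)) r j) =
          RowP S2 S1 * RestP S2 S3"
      unfolding rows prod.insert[OF finite_atLeastLessThan r0nin] RowP_def RestP_def
      using S gw_row gw_rest by (auto intro!: prod.cong arg_cong2[where f = times])
  qed
  also have "\<dots> = (\<Sum>S2\<in>Pow VE. \<Sum>S1\<in>Pow A. \<Sum>S3\<in>Pow C. RowP S2 S1 * RestP S2 S3)"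
    by (rule sum.swap)
  also have "\<dots> = (\<Sum>S2\<in>Pow VE. (\<Sum>S1\<in>Pow A. RowP S2 S1) * (\<Sum>S3\<in>Pow C. RestP S2 S3))"
    by (simp add: sum_product)
  also have "\<dots> = (\<Sum>S2\<in>Pow VE. GB a r0 1 c0 n lf rt tp (chi S2) px py * GB a (Suc r0) k c0 n lf rt (chi S2) bt px py)"
    unfolding GB_def RowP_def RestP_def A_def C_def by simp
  also have "\<dots> = (\<Sum>s\<in>bl n. GB a r0 1 c0 n lf rt tp (chi (e ` {i. i < n \<and> s!i})) px py *
       GB a (Suc r0) k c0 n lf rt (chi (e ` {i. i < n \<and> s!i})) bt px py)"
    unfolding VE_def by (rule sum_pow_list) (simp add: inj_on_def e_def)
  also have "\<dots> = (\<Sum>s\<in>bl n. GB a r0 1 c0 n lf rt tp (\<lambda>j. s!(j - Suc c0)) px py * GB a (Suc r0) k c0 n lf rt (\<lambda>j. s!(j - Suc c0)) bt px py)"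
  proof (intro sum.cong refl arg_cong2[where f = times] GB_cong conjI)
    fix s j assume "s \<in> bl n" "c0 < j" "j \<le> c0 + n"
    then have "chi (e ` {i. i < n \<and> s!i}) j = s!(j - Suc c0)"
      unfolding chi_def e_def by (auto simp: image_iff) (rule exI[of _ "j - Suc c0"], auto)
    then show "chi (e ` {i. i < n \<and> s!i}) j = s!(j - Suc c0)" "chi (e ` {i. i < n \<and> s!i}) j = s!(j - Suc c0)" by auto
  qed
  finally show ?thesis .
qed

lemma map_nth_upt: "length s = n \<Longrightarrow> map (\<lambda>j. s ! (j - Suc c0)) [Suc c0..<Suc (c0 + n)] = s"
  by (rule nth_equalityI) (auto simp del: upt_Suc)

lemma GB_blk:
  assumes "k \<ge> 1" "n \<ge> 1"
  shows "GB a r0 k c0 n lf rt tp bt px py =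
    blk a (map px [r0..<r0+k]) (map py [Suc c0..<Suc (c0+n)]) (map lf [r0..<r0+k])
      (map tp [Suc c0..<Suc (c0+n)]) (map bt [Suc c0..<Suc (c0+n)]) (map rt [r0..<r0+k])"
  using assms(1)
proof (induction k arbitrary: r0 tp rule: nat_induct_at_least)
  case base
  have "GB a r0 1 c0 n lf rt tp bt px py =
    row a (px r0) (map py [Suc c0..<Suc (c0+n)]) (lf r0) (map tp [Suc c0..<Suc (c0+n)]) (map bt [Suc c0..<Suc (c0+n)]) (rt r0)"
    by (rule GB_row[OF assms(2)])
  then show ?case
    by (simp add: mult_if10 sum.delta' finite_bl)
next
  case (Suc k)
  have L: "[r0..<r0 + Suc k] = r0 # [Suc r0..<Suc r0 + k]" by (simp add: upt_conv_Cons)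
  have len: "length (map py [Suc c0..<Suc (c0+n)]) = n" by simp
  show ?case
    unfolding GB_peel[OF Suc.hyps] L list.map blk.simps list.sel len
  proof (intro sum.cong refl)
    fix s assume "s \<in> bl n"
    then have ms: "map (\<lambda>j. s ! (j - Suc c0)) [Suc c0..<Suc (c0 + n)] = s" by (intro map_nth_upt) simp
    show "GB a r0 1 c0 n lf rt tp (\<lambda>j. s ! (j - Suc c0)) px py * GB a (Suc r0) k c0 n lf rt (\<lambda>j. s ! (j - Suc c0)) bt px py =
      row a (px r0) (map py [Suc c0..<Suc (c0 + n)]) (lf r0) (map tp [Suc c0..<Suc (c0 + n)]) s (rt r0) *
      blk a (map px [Suc r0..<Suc r0 + k]) (map py [Suc c0..<Suc (c0 + n)]) (map lf [Suc r0..<Suc r0 + k]) s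
        (map bt [Suc c0..<Suc (c0 + n)]) (map rt [Suc r0..<Suc r0 + k])"
      unfolding GB_row[OF assms(2)] Suc.IH ms ..
  qed
qed



lemma pfun_wt:
  assumes "finite I" "finite Vs"
  shows "pfun a I Vs cfg par = (\<Sum>S\<in>Pow I. \<Prod>v\<in>Vs. wt a (par v) (cfg S v))"
proof -
  have "(\<Sum>S\<in>Pow I. \<Prod>v\<in>Vs. wt a (par v) (cfg S v)) =
        (\<Sum>S\<in>Pow I. if (\<forall>v\<in>Vs. ice (cfg S v)) then \<Prod>v\<in>Vs. vweight a (par v) (cfg S v) else 0)"
  proof (intro sum.cong refl)
    fix S
    show "(\<Prod>v\<in>Vs. wt a (par v) (cfg S v)) = (if (\<forall>v\<in>Vs. ice (cfg S v)) then \<Prod>v\<in>Vs. vweight a (par v) (cfg S v) else 0)"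
    proof (cases "\<forall>v\<in>Vs. ice (cfg S v)")
      case True
      then show ?thesis by (simp add: wt_def)
    next
      case False
      then obtain v where "v \<in> Vs" "\<not> ice (cfg S v)" by auto
      then show ?thesis using assms(2) False by (auto simp: wt_def intro!: prod_zero)
    qed
  qed
  also have "\<dots> = (\<Sum>S\<in>{S. S \<subseteq> I \<and> (\<forall>v\<in>Vs. ice (cfg S v))}. \<Prod>v\<in>Vs. vweight a (par v) (cfg S v))"
  proof -
    have "{S. S \<subseteq> I \<and> (\<forall>v\<in>Vs. ice (cfg S v))} = Pow I \<inter> {S. \<forall>v\<in>Vs. ice (cfg S v)}" by auto
    then show ?thesis using assms(1) by (simp add: sum.inter_restrict)
  qed
  finally show ?thesis unfolding pfun_def by simp
qed

lemma prod_pairs: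
  "finite A \<Longrightarrow> finite B \<Longrightarrow> (\<Prod>v\<in>A \<times> B. f v) = (\<Prod>r\<in>A. \<Prod>j\<in>B. f (r, j))"
  by (simp add: prod.cartesian_product)



definition Itop :: "nat \<Rightarrow> edge set" where
  "Itop m = {H r j | r j. 1 \<le> r \<and> r \<le> m \<and> 2 \<le> j \<and> j \<le> Suc m} \<union> {V r j | r j. 2 \<le> r \<and> r \<le> Suc m \<and> 1 \<le> j \<and> j \<le> m}"

definition PS :: "nat \<Rightarrow> edge set" where
  "PS m = insert (V (m+2) (Suc m)) {H r (Suc m) | r. m+2 \<le> r \<and> r \<le> 2*m+1}"

definition Iol :: "nat \<Rightarrow> edge set" where
  "Iol m = PS m \<union> (gint (Suc m) (Suc m) 0 m \<union> gint (m+2) m m 1)"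

definition rtB :: "nat \<Rightarrow> edge set \<Rightarrow> nat \<Rightarrow> bool" where
  "rtB m P r = (if r = Suc m then V (m+2) (Suc m) \<notin> P else H r (Suc m) \<in> P)"

lemma big_agree:
  assumes m: "m \<ge> 1" and T: "T \<subseteq> Itop m" and P: "P \<subseteq> PS m"
    and Q1: "Q1 \<subseteq> gint (Suc m) (Suc m) 0 m" and Q2: "Q2 \<subseteq> gint (m+2) m m 1"
    and r: "Suc m \<le> r" "r \<le> 2*m+1" and j: "1 \<le> j" "j \<le> m"
  shows "(od_hor m (T \<union> (P \<union> (Q1 \<union> Q2))) r j, od_hor m (T \<union> (P \<union> (Q1 \<union> Q2))) r (j+1),
          od_ver m (T \<union> (P \<union> (Q1 \<union> Q2))) r j, od_ver m (T \<union> (P \<union> (Q1 \<union> Q2))) (r+1) j) =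
         (gh 0 m (\<lambda>_. True) (rtB m P) Q1 r j, gh 0 m (\<lambda>_. True) (rtB m P) Q1 r (Suc j),
          gv (Suc m) (Suc m) (\<lambda>j. V (Suc m) j \<in> T) (\<lambda>_. False) Q1 r j, gv (Suc m) (Suc m) (\<lambda>j. V (Suc m) j \<in> T) (\<lambda>_. False) Q1 (Suc r) j)"
proof -
  let ?S = "T \<union> (P \<union> (Q1 \<union> Q2))"
  have h1: "H r j' \<in> ?S \<longleftrightarrow> H r j' \<in> Q1" if "j' \<le> m" for j'
    using T P Q2 r that unfolding Itop_def PS_def gint_def by auto
  have h2: "H r (Suc m) \<in> ?S \<longleftrightarrow> H r (Suc m) \<in> P" if "r \<noteq> Suc m"
    using T Q1 Q2 r that unfolding Itop_def gint_def by auto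
  have v1: "V (m+2) (Suc m) \<in> ?S \<longleftrightarrow> V (m+2) (Suc m) \<in> P"
    using T Q1 Q2 unfolding Itop_def gint_def by auto
  have v2: "V (Suc m) j \<in> ?S \<longleftrightarrow> V (Suc m) j \<in> T"
    using P Q1 Q2 j unfolding PS_def gint_def by auto
  have v3: "V r' j \<in> ?S \<longleftrightarrow> V r' j \<in> Q1" if "Suc m < r'" for r'
    using T P Q2 j that unfolding Itop_def PS_def gint_def by auto
  have A: "od_hor m ?S r j = gh 0 m (\<lambda>_. True) (rtB m P) Q1 r j"
    using m r j h1 unfolding od_hor_def gh_def by auto
  have B: "od_hor m ?S r (j+1) = gh 0 m (\<lambda>_. True) (rtB m P) Q1 r (Suc j)"
  proof (cases "j = m")
    case True
    then show ?thesis using m r h2 v1 unfolding od_hor_def od_ver_def gh_def rtB_def by auto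
  next
    case False
    then show ?thesis using m r j h1[of "Suc j"] unfolding od_hor_def gh_def by auto
  qed
  have C: "od_ver m ?S r j = gv (Suc m) (Suc m) (\<lambda>j. V (Suc m) j \<in> T) (\<lambda>_. False) Q1 r j"
    using m r j v2 v3[of r] unfolding od_ver_def gv_def by auto
  have D: "od_ver m ?S (r+1) j = gv (Suc m) (Suc m) (\<lambda>j. V (Suc m) j \<in> T) (\<lambda>_. False) Q1 (Suc r) j"
    using m r j v3[of "Suc r"] unfolding od_ver_def gv_def by auto
  show ?thesis using A B C D by simp
qed

lemma col_agree:
  assumes m: "m \<ge> 1" and T: "T \<subseteq> Itop m" and P: "P \<subseteq> PS m"
    and Q1: "Q1 \<subseteq> gint (Suc m) (Suc m) 0 m" and Q2: "Q2 \<subseteq> gint (m+2) m m 1"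
    and r: "m+2 \<le> r" "r \<le> 2*m+1"
  shows "(od_hor m (T \<union> (P \<union> (Q1 \<union> Q2))) r (Suc m), od_hor m (T \<union> (P \<union> (Q1 \<union> Q2))) r (Suc m + 1),
          od_ver m (T \<union> (P \<union> (Q1 \<union> Q2))) r (Suc m), od_ver m (T \<union> (P \<union> (Q1 \<union> Q2))) (r+1) (Suc m)) =
         (gh m 1 (\<lambda>r. H r (Suc m) \<in> P) (\<lambda>r. H (2*m+2-r) (Suc m) \<notin> T) Q2 r (Suc m),
          gh m 1 (\<lambda>r. H r (Suc m) \<in> P) (\<lambda>r. H (2*m+2-r) (Suc m) \<notin> T) Q2 r (Suc (Suc m)),
          gv (m+2) m (\<lambda>_. V (m+2) (Suc m) \<in> P) (\<lambda>_. False) Q2 r (Suc m),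
          gv (m+2) m (\<lambda>_. V (m+2) (Suc m) \<in> P) (\<lambda>_. False) Q2 (Suc r) (Suc m))"
proof -
  let ?S = "T \<union> (P \<union> (Q1 \<union> Q2))"
  have h2: "H r (Suc m) \<in> ?S \<longleftrightarrow> H r (Suc m) \<in> P"
    using T Q1 Q2 r unfolding Itop_def gint_def by auto
  have h3: "H (2*m+2-r) (Suc m) \<in> ?S \<longleftrightarrow> H (2*m+2-r) (Suc m) \<in> T"
    using P Q1 Q2 r unfolding PS_def gint_def by auto
  have v1: "V (m+2) (Suc m) \<in> ?S \<longleftrightarrow> V (m+2) (Suc m) \<in> P"
    using T Q1 Q2 unfolding Itop_def gint_def by auto
  have v3: "V r' (Suc m) \<in> ?S \<longleftrightarrow> V r' (Suc m) \<in> Q2" if "m+2 < r'" for r'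
    using T P Q1 that unfolding Itop_def PS_def gint_def by auto
  have A: "od_hor m ?S r (Suc m) = gh m 1 (\<lambda>r. H r (Suc m) \<in> P) (\<lambda>r. H (2*m+2-r) (Suc m) \<notin> T) Q2 r (Suc m)"
    using m r h2 unfolding od_hor_def gh_def by auto
  have B: "od_hor m ?S r (Suc m + 1) = gh m 1 (\<lambda>r. H r (Suc m) \<in> P) (\<lambda>r. H (2*m+2-r) (Suc m) \<notin> T) Q2 r (Suc (Suc m))"
    using m r h3 unfolding od_hor_def gh_def by auto
  have C: "od_ver m ?S r (Suc m) = gv (m+2) m (\<lambda>_. V (m+2) (Suc m) \<in> P) (\<lambda>_. False) Q2 r (Suc m)"
    using m r v1 v3[of r] unfolding od_ver_def gv_def by auto
  have D: "od_ver m ?S (r+1) (Suc m) = gv (m+2) m (\<lambda>_. V (m+2) (Suc m) \<in> P) (\<lambda>_. False) Q2 (Suc r) (Suc m)"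
    using m r v3[of "Suc r"] unfolding od_ver_def gv_def by auto
  show ?thesis using A B C D by simp
qed

lemma even_agree:
  assumes m: "m \<ge> 1" and T: "T \<subseteq> Itop m" and R: "R \<subseteq> gint (Suc m) m 0 m"
    and r: "Suc m \<le> r" "r \<le> 2*m" and j: "1 \<le> j" "j \<le> m"
  shows "(ev_hor m (T \<union> R) r j, ev_hor m (T \<union> R) r (j+1), ev_ver m (T \<union> R) r j, ev_ver m (T \<union> R) (r+1) j) =
         (gh 0 m (\<lambda>_. True) (\<lambda>r. H (2*m+1-r) (Suc m) \<notin> T) R r j, gh 0 m (\<lambda>_. True) (\<lambda>r. H (2*m+1-r) (Suc m) \<notin> T) R r (Suc j),
          gv (Suc m) m (\<lambda>j. V (Suc m) j \<in> T) (\<lambda>_. False) R r j, gv (Suc m) m (\<lambda>j. V (Suc m) j \<in> T) (\<lambda>_. False) R (Suc r) j)"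
proof -
  let ?S = "T \<union> R"
  have h1: "H r j' \<in> ?S \<longleftrightarrow> H r j' \<in> R" if "j' \<le> m" for j'
    using T r that unfolding Itop_def by auto
  have h3: "H (2*m+1-r) (Suc m) \<in> ?S \<longleftrightarrow> H (2*m+1-r) (Suc m) \<in> T"
    using R r unfolding gint_def by auto
  have v2: "V (Suc m) j \<in> ?S \<longleftrightarrow> V (Suc m) j \<in> T"
    using R unfolding gint_def by auto
  have v3: "V r' j \<in> ?S \<longleftrightarrow> V r' j \<in> R" if "Suc m < r'" for r'
    using T that unfolding Itop_def by auto
  have A: "ev_hor m ?S r j = gh 0 m (\<lambda>_. True) (\<lambda>r. H (2*m+1-r) (Suc m) \<notin> T) R r j"
    using m r j h1 unfolding ev_hor_def gh_def by auto
  have B: "ev_hor m ?S r (j+1) = gh 0 m (\<lambda>_. True) (\<lambda>r. H (2*m+1-r) (Suc m) \<notin> T) R r (Suc j)"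
    using m r j h1[of "Suc j"] h3 unfolding ev_hor_def gh_def by auto
  have C: "ev_ver m ?S r j = gv (Suc m) m (\<lambda>j. V (Suc m) j \<in> T) (\<lambda>_. False) R r j"
    using m r j v2 v3[of r] unfolding ev_ver_def gv_def by auto
  have D: "ev_ver m ?S (r+1) j = gv (Suc m) m (\<lambda>j. V (Suc m) j \<in> T) (\<lambda>_. False) R (Suc r) j"
    using m r j v3[of "Suc r"] unfolding ev_ver_def gv_def by auto
  show ?thesis using A B C D by simp
qed

lemma top_agree_odd:
  assumes m: "m \<ge> 1" and T: "T \<subseteq> Itop m" and S: "S \<subseteq> Iol m"
    and r: "1 \<le> r" "r \<le> m" and j: "1 \<le> j" "j \<le> m"
  shows "(od_hor m (T \<union> S) r j, od_hor m (T \<union> S) r (j+1), od_ver m (T \<union> S) r j, od_ver m (T \<union> S) (r+1) j) =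
         (ev_hor m T r j, ev_hor m T r (j+1), ev_ver m T r j, ev_ver m T (r+1) j)"
proof -
  have h: "H r j' \<in> T \<union> S \<longleftrightarrow> H r j' \<in> T" for j'
    using S r unfolding Iol_def PS_def gint_def by auto
  have v: "V r' j \<in> T \<union> S \<longleftrightarrow> V r' j \<in> T" if "r' \<le> Suc m" for r'
    using S j that unfolding Iol_def PS_def gint_def by auto
  show ?thesis
    using m r j h v[of r] v[of "Suc r"] unfolding od_hor_def od_ver_def ev_hor_def ev_ver_def by auto
qed

lemma top_agree_even:
  assumes m: "m \<ge> 1" and T: "T \<subseteq> Itop m" and S: "S \<subseteq> gint (Suc m) m 0 m"
    and r: "1 \<le> r" "r \<le> m" and j: "1 \<le> j" "j \<le> m"
  shows "(ev_hor m (T \<union> S) r j, ev_hor m (T \<union> S) r (j+1), ev_ver m (T \<union> S) r j, ev_ver m (T \<union> S) (r+1) j) =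
         (ev_hor m T r j, ev_hor m T r (j+1), ev_ver m T r j, ev_ver m T (r+1) j)"
proof -
  have h: "H r j' \<in> T \<union> S \<longleftrightarrow> H r j' \<in> T" for j'
    using S r unfolding gint_def by auto
  have v: "V r' j \<in> T \<union> S \<longleftrightarrow> V r' j \<in> T" if "r' \<le> Suc m" for r'
    using S j that unfolding gint_def by auto
  show ?thesis
    using m r j h v[of r] v[of "Suc r"] unfolding ev_hor_def ev_ver_def by auto
qed



lemma od_internal_split: "m \<ge> 1 \<Longrightarrow> od_internal m = Itop m \<union> Iol m"
  unfolding od_internal_def Itop_def Iol_def PS_def gint_def
  by (auto; linarith?)

lemma Itop_Iol: "Itop m \<inter> Iol m = {}"
  unfolding Itop_def Iol_def PS_def gint_def by auto

lemma ev_internal_split: "ev_internal m = Itop m \<union> gint (Suc m) m 0 m"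
  unfolding ev_internal_def Itop_def gint_def
  by (auto; linarith?)

lemma Itop_Iel: "Itop m \<inter> gint (Suc m) m 0 m = {}"
  unfolding Itop_def gint_def by auto

lemma PS_G: "PS m \<inter> (gint (Suc m) (Suc m) 0 m \<union> gint (m+2) m m 1) = {}"
  unfolding PS_def gint_def by auto

lemma G_G: "gint (Suc m) (Suc m) 0 m \<inter> gint (m+2) m m 1 = {}"
  unfolding gint_def by auto

lemma finite_Itop: "finite (Itop m)"
proof -
  have "Itop m \<subseteq> (\<lambda>(r,j). H r j) ` ({..m} \<times> {..Suc m}) \<union> (\<lambda>(r,j). V r j) ` ({..Suc m} \<times> {..m})"
    unfolding Itop_def by auto
  then show ?thesis by (rule finite_subset) auto
qed

lemma finite_PS: "finite (PS m)"
proof -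
  have "PS m \<subseteq> insert (V (m+2) (Suc m)) ((\<lambda>r. H r (Suc m)) ` {..2*m+1})"
    unfolding PS_def by auto
  then show ?thesis by (rule finite_subset) auto
qed

lemma finite_Iol: "finite (Iol m)"
  unfolding Iol_def using finite_PS finite_gint by auto

lemma od_verts_split: "od_verts m = ({1..m} \<times> {1..m}) \<union> (({Suc m..<Suc m + Suc m} \<times> {0<..m}) \<union> ({m+2..<m+2+m} \<times> {m<..Suc m}))"
  unfolding od_verts_def by auto

lemma ev_verts_split: "ev_verts m = ({1..m} \<times> {1..m}) \<union> ({Suc m..<Suc m + m} \<times> {0<..m})"
  unfolding ev_verts_def by auto



abbreviation "ocfg m \<equiv> (\<lambda>S (r, j). (od_hor m S r j, od_hor m S r (j+1), od_ver m S r j, od_ver m S (r+1) j))"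
abbreviation "ecfg m \<equiv> (\<lambda>S (r, j). (ev_hor m S r j, ev_hor m S r (j+1), ev_ver m S r j, ev_ver m S (r+1) j))"
abbreviation "opar m x y \<equiv> (\<lambda>(r, j). x (min r (2*m+2-r)) * inverse (y j))"
abbreviation "epar m x y \<equiv> (\<lambda>(r, j). x (min r (2*m+1-r)) * inverse (y j))"

definition GBbig where
  "GBbig a m x y T P = GB a (Suc m) (Suc m) 0 m (\<lambda>_. True) (rtB m P) (\<lambda>j. V (Suc m) j \<in> T) (\<lambda>_. False)
      (\<lambda>r. x (min r (2*m+2-r))) y"

definition GBcol where
  "GBcol a m x y T P = GB a (m+2) m m 1 (\<lambda>r. H r (Suc m) \<in> P) (\<lambda>r. H (2*m+2-r) (Suc m) \<notin> T)
      (\<lambda>_. V (m+2) (Suc m) \<in> P) (\<lambda>_. False) (\<lambda>r. x (min r (2*m+2-r))) y"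

lemma phi_odd:
  assumes m: "m \<ge> 1" and T: "T \<subseteq> Itop m"
  shows "(\<Sum>S\<in>Pow (Iol m). \<Prod>v\<in>({Suc m..<Suc m + Suc m} \<times> {0<..m}) \<union> ({m+2..<m+2+m} \<times> {m<..Suc m}).
            wt a (opar m x y v) (ocfg m (T \<union> S) v))
       = (\<Sum>P\<in>Pow (PS m). GBbig a m x y T P * GBcol a m x y T P)"
  unfolding Iol_def sum_Pow_Un[OF finite_PS finite_UnI[OF finite_gint finite_gint] PS_G]
proof (intro sum.cong refl)
  fix P assume P: "P \<in> Pow (PS m)"
  let ?px = "\<lambda>r. x (min r (2*m+2-r))"
  let ?gb = "gw a (Suc m) (Suc m) 0 m (\<lambda>_. True) (rtB m P) (\<lambda>j. V (Suc m) j \<in> T) (\<lambda>_. False) ?px y"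
  let ?gc = "gw a (m+2) m m 1 (\<lambda>r. H r (Suc m) \<in> P) (\<lambda>r. H (2*m+2-r) (Suc m) \<notin> T) (\<lambda>_. V (m+2) (Suc m) \<in> P) (\<lambda>_. False) ?px y"
  have disj: "({Suc m..<Suc m + Suc m} \<times> {0<..m}) \<inter> ({m+2..<m+2+m} \<times> {m<..Suc m}) = {}" by auto
  have "(\<Sum>S'\<in>Pow (gint (Suc m) (Suc m) 0 m \<union> gint (m + 2) m m 1).
          \<Prod>v\<in>({Suc m..<Suc m + Suc m} \<times> {0<..m}) \<union> ({m+2..<m+2+m} \<times> {m<..Suc m}). wt a (opar m x y v) (ocfg m (T \<union> (P \<union> S')) v))
     = (\<Sum>Q1\<in>Pow (gint (Suc m) (Suc m) 0 m). \<Sum>Q2\<in>Pow (gint (m + 2) m m 1).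
          (\<Prod>r\<in>{Suc m..<Suc m + Suc m}. \<Prod>j\<in>{0<..m}. ?gb Q1 r j) * (\<Prod>r\<in>{m+2..<m+2+m}. \<Prod>j\<in>{m<..Suc m}. ?gc Q2 r j))"
    unfolding sum_Pow_Un[OF finite_gint finite_gint G_G]
  proof (intro sum.cong refl)
    fix Q1 Q2 assume Q1: "Q1 \<in> Pow (gint (Suc m) (Suc m) 0 m)" and Q2: "Q2 \<in> Pow (gint (m + 2) m m 1)"
    have A: "(\<Prod>v\<in>{Suc m..<Suc m + Suc m} \<times> {0<..m}. wt a (opar m x y v) (ocfg m (T \<union> (P \<union> (Q1 \<union> Q2))) v))
        = (\<Prod>r\<in>{Suc m..<Suc m + Suc m}. \<Prod>j\<in>{0<..m}. ?gb Q1 r j)"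
      unfolding prod_pairs[OF finite_atLeastLessThan finite_greaterThanAtMost]
    proof (intro prod.cong refl)
      fix r j assume "r \<in> {Suc m..<Suc m + Suc m}" "j \<in> {0<..m}"
      then show "wt a (opar m x y (r, j)) (ocfg m (T \<union> (P \<union> (Q1 \<union> Q2))) (r, j)) = ?gb Q1 r j"
        using big_agree[OF m T _ _ _ , of P Q1 Q2 r j] P Q1 Q2 unfolding gw_def by auto
    qed
    have B: "(\<Prod>v\<in>{m+2..<m+2+m} \<times> {m<..Suc m}. wt a (opar m x y v) (ocfg m (T \<union> (P \<union> (Q1 \<union> Q2))) v))
        = (\<Prod>r\<in>{m+2..<m+2+m}. \<Prod>j\<in>{m<..Suc m}. ?gc Q2 r j)"
      unfolding prod_pairs[OF finite_atLeastLessThan finite_greaterThanAtMost]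
    proof (intro prod.cong refl)
      fix r j assume r: "r \<in> {m+2..<m+2+m}" and j: "j \<in> {m<..Suc m}"
      then have jj: "j = Suc m" by auto
      show "wt a (opar m x y (r, j)) (ocfg m (T \<union> (P \<union> (Q1 \<union> Q2))) (r, j)) = ?gc Q2 r j"
        using col_agree[OF m T _ _ _, of P Q1 Q2 r] P Q1 Q2 r unfolding gw_def jj by auto
    qed
    show "(\<Prod>v\<in>({Suc m..<Suc m + Suc m} \<times> {0<..m}) \<union> ({m+2..<m+2+m} \<times> {m<..Suc m}). wt a (opar m x y v) (ocfg m (T \<union> (P \<union> (Q1 \<union> Q2))) v))
      = (\<Prod>r\<in>{Suc m..<Suc m + Suc m}. \<Prod>j\<in>{0<..m}. ?gb Q1 r j) * (\<Prod>r\<in>{m+2..<m+2+m}. \<Prod>j\<in>{m<..Suc m}. ?gc Q2 r j)"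
      unfolding A[symmetric] B[symmetric]
      by (rule prod.union_disjoint[OF finite_cartesian_product[OF finite_atLeastLessThan finite_greaterThanAtMost]
          finite_cartesian_product[OF finite_atLeastLessThan finite_greaterThanAtMost] disj])
  qed
  also have "\<dots> = GBbig a m x y T P * GBcol a m x y T P"
    unfolding GBbig_def GBcol_def GB_def by (simp add: sum_product)
  finally show "(\<Sum>S'\<in>Pow (gint (Suc m) (Suc m) 0 m \<union> gint (m + 2) m m 1).
          \<Prod>v\<in>({Suc m..<Suc m + Suc m} \<times> {0<..m}) \<union> ({m+2..<m+2+m} \<times> {m<..Suc m}). wt a (opar m x y v) (ocfg m (T \<union> (P \<union> S')) v))
     = GBbig a m x y T P * GBcol a m x y T P" .
qed

lemma phi_even:
  assumes m: "m \<ge> 1" and T: "T \<subseteq> Itop m"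
  shows "(\<Sum>S\<in>Pow (gint (Suc m) m 0 m). \<Prod>v\<in>{Suc m..<Suc m + m} \<times> {0<..m}. wt a (epar m x y v) (ecfg m (T \<union> S) v))
       = GB a (Suc m) m 0 m (\<lambda>_. True) (\<lambda>r. H (2*m+1-r) (Suc m) \<notin> T) (\<lambda>j. V (Suc m) j \<in> T) (\<lambda>_. False)
           (\<lambda>r. x (min r (2*m+1-r))) y"
  unfolding GB_def add_0
proof (intro sum.cong refl)
  fix S assume S: "S \<in> Pow (gint (Suc m) m 0 m)"
  show "(\<Prod>v\<in>{Suc m..<Suc m + m} \<times> {0<..m}. wt a (epar m x y v) (ecfg m (T \<union> S) v)) =
     (\<Prod>r\<in>{Suc m..<Suc m + m}. \<Prod>j\<in>{0<..m}. gw a (Suc m) m 0 m (\<lambda>_. True) (\<lambda>r. H (2*m+1-r) (Suc m) \<notin> T)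
        (\<lambda>j. V (Suc m) j \<in> T) (\<lambda>_. False) (\<lambda>r. x (min r (2*m+1-r))) y S r j)"
    unfolding prod_pairs[OF finite_atLeastLessThan finite_greaterThanAtMost]
  proof (intro prod.cong refl)
    fix r j assume "r \<in> {Suc m..<Suc m + m}" "j \<in> {0<..m}"
    then show "wt a (epar m x y (r, j)) (ecfg m (T \<union> S) (r, j)) = gw a (Suc m) m 0 m (\<lambda>_. True) (\<lambda>r. H (2*m+1-r) (Suc m) \<notin> T)
        (\<lambda>j. V (Suc m) j \<in> T) (\<lambda>_. False) (\<lambda>r. x (min r (2*m+1-r))) y S r j"
      using even_agree[OF m T, of S r j] S unfolding gw_def by auto
  qed
qed

lemma blk_col: "blk a ps [Y] hls [u] [u'] hrs = col a Y ps u hls hrs u'"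
proof (induction ps arbitrary: hls hrs u)
  case Nil
  then show ?case by simp
next
  case (Cons p ps)
  have b1: "(\<Sum>s\<in>bl (Suc 0). F s) = F [True] + F [False]" for F :: "bool list \<Rightarrow> complex"
    using sum_bl_Suc[where n=0 and F=F] by (simp add: sum_bl_0)
  show ?case
    by (cases "hd hrs") (simp_all add: b1 Cons.IH UNIV_bool_sum mult_if10)
qed



definition ops :: "nat \<Rightarrow> (nat \<Rightarrow> complex) \<Rightarrow> complex list" where
  "ops m x = map (\<lambda>r. x (min r (2*m+2-r))) [m+2..<m+2+m]"

definition orho :: "nat \<Rightarrow> edge set \<Rightarrow> bool list" where
  "orho m T = map (\<lambda>r. H (2*m+2-r) (Suc m) \<notin> T) [m+2..<m+2+m]"

definition ee :: "nat \<Rightarrow> nat \<Rightarrow> edge" where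
  "ee m i = (if i = 0 then V (m+2) (Suc m) else H (Suc m + i) (Suc m))"

lemma PS_img: "PS m = ee m ` {..<Suc m}"
proof (rule set_eqI)
  fix z
  show "z \<in> PS m \<longleftrightarrow> z \<in> ee m ` {..<Suc m}"
  proof
    assume "z \<in> PS m"
    then consider "z = V (m+2) (Suc m)" | r where "z = H r (Suc m)" "m+2 \<le> r" "r \<le> 2*m+1"
      unfolding PS_def by auto
    then show "z \<in> ee m ` {..<Suc m}"
    proof cases
      case 1 then show ?thesis unfolding ee_def by (auto intro: image_eqI[where x = 0])
    next
      case (2 r)
      then have "z = ee m (r - Suc m)" "r - Suc m < Suc m" unfolding ee_def by auto
      then show ?thesis by auto
    qed
  next
    assume "z \<in> ee m ` {..<Suc m}"
    then show "z \<in> PS m" unfolding ee_def PS_def by auto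
  qed
qed

lemma inj_ee: "inj_on (ee m) {..<Suc m}"
  unfolding inj_on_def ee_def by auto

lemma memb_V: "V (m+2) (Suc m) \<in> ee m ` {i. i < Suc m \<and> (b # hs) ! i} \<longleftrightarrow> b"
  unfolding ee_def by (auto simp: image_iff)

lemma memb_H:
  assumes "m+2 \<le> r" "r < m+2+m"
  shows "H r (Suc m) \<in> ee m ` {i. i < Suc m \<and> (b # hs) ! i} \<longleftrightarrow> hs ! (r - (m+2))"
proof
  assume "H r (Suc m) \<in> ee m ` {i. i < Suc m \<and> (b # hs) ! i}"
  then obtain i where i: "i < Suc m" "(b # hs) ! i" "H r (Suc m) = ee m i" by auto
  then have "i \<noteq> 0" "r = Suc m + i" unfolding ee_def by (auto split: if_splits)
  then show "hs ! (r - (m+2))" using i(2) by (cases i) auto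
next
  assume h: "hs ! (r - (m+2))"
  have "H r (Suc m) = ee m (r - Suc m)" "r - Suc m < Suc m" "(b # hs) ! (r - Suc m)"
    using assms h unfolding ee_def by (auto simp: nth_Cons')
  then show "H r (Suc m) \<in> ee m ` {i. i < Suc m \<and> (b # hs) ! i}" by blast
qed

lemma map_const_upt: "map (\<lambda>_. c) [i..<j] = replicate (j - i) c"
  by (simp add: map_replicate_const)

lemma phi_odd_list:
  assumes m: "m \<ge> 1"
  shows "(\<Sum>P\<in>Pow (PS m). GBbig a m x y T P * GBcol a m x y T P) =
    (\<Sum>hs\<in>bl m. \<Sum>g\<in>UNIV. blk a (x (Suc m) # ops m x) (map y [1..<Suc m]) (True # replicate m True)
        (map (\<lambda>j. V (Suc m) j \<in> T) [1..<Suc m]) (replicate m False) (g#hs) * col a (y (Suc m)) (ops m x) (\<not>g) hs (orho m T) False)"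
proof -
  define G where "G = (\<lambda>P. GBbig a m x y T P * GBcol a m x y T P)"
  define F where "F = (\<lambda>g hs. blk a (x (Suc m) # ops m x) (map y [1..<Suc m]) (True # replicate m True)
        (map (\<lambda>j. V (Suc m) j \<in> T) [1..<Suc m]) (replicate m False) (g#hs) * col a (y (Suc m)) (ops m x) (\<not>g) hs (orho m T) False)"
  have key: "G (ee m ` {i. i < Suc m \<and> (b # hs) ! i}) = F (\<not>b) hs" if hs: "length hs = m" for b hs
  proof -
    let ?P = "ee m ` {i. i < Suc m \<and> (b # hs) ! i}"
    have up1: "[Suc m..<Suc m + Suc m] = Suc m # [m+2..<m+2+m]" by (simp add: upt_conv_Cons)
    have L1: "map (\<lambda>r. x (min r (2*m+2-r))) [Suc m..<Suc m + Suc m] = x (Suc m) # ops m x"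
      unfolding up1 ops_def by (simp; arith)
    have L5: "map (rtB m ?P) [Suc m..<Suc m + Suc m] = (\<not>b) # hs"
    proof -
      have rt0: "rtB m ?P (Suc m) = (\<not>b)" unfolding rtB_def using memb_V[of m b hs] by simp
      have mh: "map (rtB m ?P) [m+2..<m+2+m] = hs"
      proof (rule nth_equalityI)
        show "length (map (rtB m ?P) [m+2..<m+2+m]) = length hs" unfolding length_map length_upt using hs by simp
        fix i assume "i < length (map (rtB m ?P) [m+2..<m+2+m])"
        then have i: "i < m" unfolding length_map length_upt by simp
        then show "map (rtB m ?P) [m+2..<m+2+m] ! i = hs ! i"
          using memb_H[of m "m+2+i" b hs] unfolding rtB_def by (simp del: upt_Suc)
      qed
      show ?thesis unfolding up1 list.map rt0 mh ..
    qed
    have L6: "map (\<lambda>r. H r (Suc m) \<in> ?P) [m+2..<m+2+m] = hs"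
    proof (rule nth_equalityI)
      show "length (map (\<lambda>r. H r (Suc m) \<in> ?P) [m+2..<m+2+m]) = length hs" unfolding length_map length_upt using hs by simp
      fix i assume "i < length (map (\<lambda>r. H r (Suc m) \<in> ?P) [m+2..<m+2+m])"
      then have i: "i < m" unfolding length_map length_upt by simp
      then show "map (\<lambda>r. H r (Suc m) \<in> ?P) [m+2..<m+2+m] ! i = hs ! i"
        using memb_H[of m "m+2+i" b hs] by (simp del: upt_Suc)
    qed
    have big: "GBbig a m x y T ?P = blk a (x (Suc m) # ops m x) (map y [1..<Suc m]) (True # replicate m True)
        (map (\<lambda>j. V (Suc m) j \<in> T) [1..<Suc m]) (replicate m False) ((\<not>b) # hs)"
    proof -
      have k1: "(1::nat) \<le> Suc m" by simp
      show ?thesis unfolding GBbig_def GB_blk[OF k1 m] L1 L5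
        by (simp add: map_const_upt del: upt_Suc)
    qed
    have col: "GBcol a m x y T ?P = col a (y (Suc m)) (ops m x) b hs (orho m T) False"
      unfolding GBcol_def GB_blk[OF m order_refl] L6 memb_V
      by (simp add: map_const_upt ops_def orho_def blk_col[symmetric])
    show ?thesis unfolding G_def F_def big col by simp
  qed
  have "(\<Sum>P\<in>Pow (PS m). G P) = (\<Sum>s\<in>bl (Suc m). G (ee m ` {i. i < Suc m \<and> s ! i}))"
    unfolding PS_img by (rule sum_pow_list[OF inj_ee])
  also have "\<dots> = (\<Sum>hs\<in>bl m. F False hs) + (\<Sum>hs\<in>bl m. F True hs)"
  proof -
    have 1: "(\<Sum>hs\<in>bl m. G (ee m ` {i. i < Suc m \<and> (True # hs) ! i})) = (\<Sum>hs\<in>bl m. F False hs)"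
      by (rule sum.cong) (use key[of _ True] in auto)
    have 2: "(\<Sum>hs\<in>bl m. G (ee m ` {i. i < Suc m \<and> (False # hs) ! i})) = (\<Sum>hs\<in>bl m. F True hs)"
      by (rule sum.cong) (use key[of _ False] in auto)
    show ?thesis unfolding sum_bl_Suc 1 2 ..
  qed
  also have "\<dots> = (\<Sum>hs\<in>bl m. \<Sum>g\<in>UNIV. F g hs)"
    by (simp add: UNIV_bool_sum sum.distrib add.commute)
  finally show ?thesis unfolding G_def F_def .
qed



definition topW where
  "topW a m x y T = (\<Prod>v\<in>{1..m} \<times> {1..m}. wt a (epar m x y v) (ecfg m T v))"

lemma Vtop_disj: "({1..m} \<times> {1..m}) \<inter> (({Suc m..<Suc m + Suc m} \<times> {0<..m}) \<union> ({m+2..<m+2+m} \<times> {m<..Suc m})) = {}"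
  by auto

lemma Vtop_disj_e: "({1..m} \<times> {1..m}) \<inter> ({Suc m..<Suc m + m} \<times> {0<..m}) = {}"
  by auto

lemma Z_odd_split:
  assumes m: "m \<ge> 1"
  shows "Z_HT_odd a m x y = (\<Sum>T\<in>Pow (Itop m). topW a m x y T *
     (\<Sum>S\<in>Pow (Iol m). \<Prod>v\<in>({Suc m..<Suc m + Suc m} \<times> {0<..m}) \<union> ({m+2..<m+2+m} \<times> {m<..Suc m}).
            wt a (opar m x y v) (ocfg m (T \<union> S) v)))"
proof -
  let ?V2 = "({Suc m..<Suc m + Suc m} \<times> {0<..m}) \<union> ({m+2..<m+2+m} \<times> {m<..Suc m})"
  have fin1: "finite (od_internal m)" unfolding od_internal_split[OF m] using finite_Itop finite_Iol by auto
  have fin2: "finite (od_verts m)" unfolding od_verts_split by auto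
  have fV1: "finite ({1..m} \<times> {1..m})" and fV2: "finite ?V2" by auto
  have "Z_HT_odd a m x y = (\<Sum>S\<in>Pow (Itop m \<union> Iol m). \<Prod>v\<in>({1..m} \<times> {1..m}) \<union> ?V2. wt a (opar m x y v) (ocfg m S v))"
    unfolding Z_HT_odd_def pfun_wt[OF fin1 fin2] by (simp only: od_internal_split[OF m] od_verts_split)
  also have "\<dots> = (\<Sum>T\<in>Pow (Itop m). \<Sum>S\<in>Pow (Iol m). \<Prod>v\<in>({1..m} \<times> {1..m}) \<union> ?V2. wt a (opar m x y v) (ocfg m (T \<union> S) v))"
    by (rule sum_Pow_Un[OF finite_Itop finite_Iol Itop_Iol])
  also have "\<dots> = (\<Sum>T\<in>Pow (Itop m). \<Sum>S\<in>Pow (Iol m). topW a m x y T * (\<Prod>v\<in>?V2. wt a (opar m x y v) (ocfg m (T \<union> S) v)))"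
  proof (intro sum.cong refl)
    fix T S assume T: "T \<in> Pow (Itop m)" and S: "S \<in> Pow (Iol m)"
    have tw: "(\<Prod>v\<in>{1..m} \<times> {1..m}. wt a (opar m x y v) (ocfg m (T \<union> S) v)) = topW a m x y T"
      unfolding topW_def
    proof (intro prod.cong refl)
      fix v assume "v \<in> {1..m} \<times> {1..m}"
      then obtain r j where v: "v = (r, j)" "1 \<le> r" "r \<le> m" "1 \<le> j" "j \<le> m" by auto
      have "min r (2*m+2-r) = min r (2*m+1-r)" using v by auto
      then show "wt a (opar m x y v) (ocfg m (T \<union> S) v) = wt a (epar m x y v) (ecfg m T v)"
        using top_agree_odd[OF m _ _ v(2-5), of T S] T S v(1) by simp
    qed
    show "(\<Prod>v\<in>({1..m} \<times> {1..m}) \<union> ?V2. wt a (opar m x y v) (ocfg m (T \<union> S) v)) =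
       topW a m x y T * (\<Prod>v\<in>?V2. wt a (opar m x y v) (ocfg m (T \<union> S) v))"
      unfolding prod.union_disjoint[OF fV1 fV2 Vtop_disj] tw ..
  qed
  also have "\<dots> = (\<Sum>T\<in>Pow (Itop m). topW a m x y T *
     (\<Sum>S\<in>Pow (Iol m). \<Prod>v\<in>?V2. wt a (opar m x y v) (ocfg m (T \<union> S) v)))"
    by (simp add: sum_distrib_left)
  finally show ?thesis .
qed

lemma Z_even_split:
  assumes m: "m \<ge> 1"
  shows "Z_HT_even a m x y = (\<Sum>T\<in>Pow (Itop m). topW a m x y T *
     (\<Sum>S\<in>Pow (gint (Suc m) m 0 m). \<Prod>v\<in>{Suc m..<Suc m + m} \<times> {0<..m}. wt a (epar m x y v) (ecfg m (T \<union> S) v)))"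
proof -
  let ?V2 = "{Suc m..<Suc m + m} \<times> {0<..m}"
  have fin1: "finite (ev_internal m)" unfolding ev_internal_split using finite_Itop finite_gint by auto
  have fin2: "finite (ev_verts m)" unfolding ev_verts_split by auto
  have fV1: "finite ({1..m} \<times> {1..m})" and fV2: "finite ?V2" by auto
  have "Z_HT_even a m x y = (\<Sum>S\<in>Pow (Itop m \<union> gint (Suc m) m 0 m). \<Prod>v\<in>({1..m} \<times> {1..m}) \<union> ?V2. wt a (epar m x y v) (ecfg m S v))"
    unfolding Z_HT_even_def pfun_wt[OF fin1 fin2] by (simp only: ev_internal_split ev_verts_split)
  also have "\<dots> = (\<Sum>T\<in>Pow (Itop m). \<Sum>S\<in>Pow (gint (Suc m) m 0 m). \<Prod>v\<in>({1..m} \<times> {1..m}) \<union> ?V2. wt a (epar m x y v) (ecfg m (T \<union> S) v))"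
    by (rule sum_Pow_Un[OF finite_Itop finite_gint Itop_Iel])
  also have "\<dots> = (\<Sum>T\<in>Pow (Itop m). \<Sum>S\<in>Pow (gint (Suc m) m 0 m). topW a m x y T * (\<Prod>v\<in>?V2. wt a (epar m x y v) (ecfg m (T \<union> S) v)))"
  proof (intro sum.cong refl)
    fix T S assume T: "T \<in> Pow (Itop m)" and S: "S \<in> Pow (gint (Suc m) m 0 m)"
    have tw: "(\<Prod>v\<in>{1..m} \<times> {1..m}. wt a (epar m x y v) (ecfg m (T \<union> S) v)) = topW a m x y T"
      unfolding topW_def
    proof (intro prod.cong refl)
      fix v assume "v \<in> {1..m} \<times> {1..m}"
      then obtain r j where v: "v = (r, j)" "1 \<le> r" "r \<le> m" "1 \<le> j" "j \<le> m" by auto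
      then show "wt a (epar m x y v) (ecfg m (T \<union> S) v) = wt a (epar m x y v) (ecfg m T v)"
        using top_agree_even[OF m _ _ v(2-5), of T S] T S v(1) by simp
    qed
    show "(\<Prod>v\<in>({1..m} \<times> {1..m}) \<union> ?V2. wt a (epar m x y v) (ecfg m (T \<union> S) v)) =
       topW a m x y T * (\<Prod>v\<in>?V2. wt a (epar m x y v) (ecfg m (T \<union> S) v))"
      unfolding prod.union_disjoint[OF fV1 fV2 Vtop_disj_e] tw ..
  qed
  also have "\<dots> = (\<Sum>T\<in>Pow (Itop m). topW a m x y T *
     (\<Sum>S\<in>Pow (gint (Suc m) m 0 m). \<Prod>v\<in>?V2. wt a (epar m x y v) (ecfg m (T \<union> S) v)))"
    by (simp add: sum_distrib_left)
  finally show ?thesis .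
qed



lemma len_ops: "length (ops m x) = m" unfolding ops_def length_map length_upt by simp

lemma ops_even: "map (\<lambda>r. x (min r (2*m+1-r))) [Suc m..<Suc m + m] = ops m x"
  unfolding ops_def
proof (rule nth_equalityI)
  show "length (map (\<lambda>r. x (min r (2*m+1-r))) [Suc m..<Suc m + m]) = length (map (\<lambda>r. x (min r (2*m+2-r))) [m+2..<m+2+m])"
    unfolding length_map length_upt by simp
  fix i assume "i < length (map (\<lambda>r. x (min r (2*m+1-r))) [Suc m..<Suc m + m])"
  then have i: "i < m" unfolding length_map length_upt by simp
  have "min (Suc m + i) (2*m+1-(Suc m + i)) = min (m+2+i) (2*m+2-(m+2+i))" using i by auto
  then show "map (\<lambda>r. x (min r (2*m+1-r))) [Suc m..<Suc m + m] ! i = map (\<lambda>r. x (min r (2*m+2-r))) [m+2..<m+2+m] ! i"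
    using i by (simp del: upt_Suc)
qed

lemma orho_even: "map (\<lambda>r. H (2*m+1-r) (Suc m) \<notin> T) [Suc m..<Suc m + m] = orho m T"
  unfolding orho_def
proof (rule nth_equalityI)
  show "length (map (\<lambda>r. H (2*m+1-r) (Suc m) \<notin> T) [Suc m..<Suc m + m]) = length (map (\<lambda>r. H (2*m+2-r) (Suc m) \<notin> T) [m+2..<m+2+m])"
    unfolding length_map length_upt by simp
  fix i assume "i < length (map (\<lambda>r. H (2*m+1-r) (Suc m) \<notin> T) [Suc m..<Suc m + m])"
  then have i: "i < m" unfolding length_map length_upt by simp
  have "2*m+1-(Suc m + i) = 2*m+2-(m+2+i)" using i by auto
  then show "map (\<lambda>r. H (2*m+1-r) (Suc m) \<notin> T) [Suc m..<Suc m + m] ! i = map (\<lambda>r. H (2*m+2-r) (Suc m) \<notin> T) [m+2..<m+2+m] ! i"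
    using i by (simp del: upt_Suc)
qed

lemma prod_ops:
  "(\<Prod>p\<leftarrow>ops m x. f p) = (\<Prod>i\<in>{1..m}. f (x i))"
proof -
  have "(\<Prod>p\<leftarrow>ops m x. f p) = (\<Prod>r\<leftarrow>[m+2..<m+2+m]. f (x (min r (2*m+2-r))))"
    unfolding ops_def by (simp add: comp_def)
  also have "\<dots> = (\<Prod>r\<in>{m+2..<m+2+m}. f (x (min r (2*m+2-r))))"
    using prod.distinct_set_conv_list[of "[m+2..<m+2+m]" "\<lambda>r. f (x (min r (2*m+2-r)))"]
    by (simp only: set_upt distinct_upt simp_thms)
  also have "\<dots> = (\<Prod>i\<in>{1..m}. f (x i))"
    by (rule prod.reindex_bij_witness[of _ "\<lambda>i. 2*m+2-i" "\<lambda>r. 2*m+2-r"]) (auto simp: min_def)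
  finally show ?thesis .
qed

lemma prod_ys:
  "(\<Prod>q\<leftarrow>map y [1..<Suc m]. f q) = (\<Prod>i\<in>{1..m}. f (y i))"
proof -
  have "(\<Prod>q\<leftarrow>map y [1..<Suc m]. f q) = (\<Prod>i\<leftarrow>[1..<Suc m]. f (y i))"
    by (simp add: comp_def del: upt_Suc)
  also have "\<dots> = (\<Prod>i\<in>{1..<Suc m}. f (y i))"
    using prod.distinct_set_conv_list[of "[1..<Suc m]" "\<lambda>i. f (y i)"]
    by (simp only: set_upt distinct_upt simp_thms)
  also have "\<dots> = (\<Prod>i\<in>{1..m}. f (y i))" by (simp only: atLeastLessThanSuc_atLeastAtMost)
  finally show ?thesis .
qed

lemma core:
  assumes m: "m \<ge> 1" and T: "T \<subseteq> Itop m" and a: "a \<noteq> 0"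
    and nz: "\<forall>i\<in>{1..m+1}. x i \<noteq> 0 \<and> y i \<noteq> 0" and Y: "y (m+1) = a * x (m+1)"
  shows "(\<Sum>S\<in>Pow (Iol m). \<Prod>v\<in>({Suc m..<Suc m + Suc m} \<times> {0<..m}) \<union> ({m+2..<m+2+m} \<times> {m<..Suc m}).
            wt a (opar m x y v) (ocfg m (T \<union> S) v))
      = (\<Prod>i=1..m. sigma (a * inverse (x i) * y (m+1)) * sigma (a * inverse (x (m+1)) * y i))
      * (\<Sum>S\<in>Pow (gint (Suc m) m 0 m). \<Prod>v\<in>{Suc m..<Suc m + m} \<times> {0<..m}. wt a (epar m x y v) (ecfg m (T \<union> S) v))"
proof -
  let ?X = "x (Suc m)"
  let ?ps = "ops m x" and ?ys = "map y [1..<Suc m]" and ?ts = "map (\<lambda>j. V (Suc m) j \<in> T) [1..<Suc m]"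
  have X: "?X \<noteq> 0" using nz by auto
  have ps: "\<forall>p\<in>set ?ps. p \<noteq> 0" unfolding ops_def set_map set_upt
  proof
    fix p assume "p \<in> (\<lambda>r. x (min r (2*m+2-r))) ` {m+2..<m+2+m}"
    then obtain r where r: "r \<in> {m+2..<m+2+m}" "p = x (min r (2*m+2-r))" by auto
    have "min r (2*m+2-r) \<in> {1..m+1}" using r(1) by auto
    then show "p \<noteq> 0" using nz r(2) by auto
  qed
  have ys: "\<forall>q\<in>set ?ys. q \<noteq> 0" unfolding set_map set_upt using nz by auto
  have lts: "length ?ts = length ?ys" by simp
  have Y': "y (Suc m) = a * ?X" using Y by simp
  note LM = list_main[OF a X ps ys lts, of "orho m T"]
  have lys: "length ?ys = m" by simp
  have "(\<Sum>S\<in>Pow (Iol m). \<Prod>v\<in>({Suc m..<Suc m + Suc m} \<times> {0<..m}) \<union> ({m+2..<m+2+m} \<times> {m<..Suc m}).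
            wt a (opar m x y v) (ocfg m (T \<union> S) v))
      = (\<Sum>hs\<in>bl m. \<Sum>g\<in>UNIV. blk a (?X # ?ps) ?ys (True # replicate m True) ?ts (replicate m False) (g#hs)
           * col a (a * ?X) ?ps (\<not>g) hs (orho m T) False)"
    unfolding phi_odd[OF m T] phi_odd_list[OF m] Y' ..
  also have "\<dots> = (\<Prod>p\<leftarrow>?ps. sigma (a * inverse (p * inverse (a * ?X)))) * (\<Prod>q\<leftarrow>?ys. sigma (a * inverse (?X * inverse q)))
       * blk a ?ps ?ys (replicate m True) ?ts (replicate m False) (orho m T)"
    using LM unfolding len_ops lys .
  also have "blk a ?ps ?ys (replicate m True) ?ts (replicate m False) (orho m T) =
      (\<Sum>S\<in>Pow (gint (Suc m) m 0 m). \<Prod>v\<in>{Suc m..<Suc m + m} \<times> {0<..m}. wt a (epar m x y v) (ecfg m (T \<union> S) v))"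
    unfolding phi_even[OF m T] GB_blk[OF m m] ops_even orho_even
    by (simp add: map_const_upt del: upt_Suc)
  also have "(\<Prod>p\<leftarrow>?ps. sigma (a * inverse (p * inverse (a * ?X)))) * (\<Prod>q\<leftarrow>?ys. sigma (a * inverse (?X * inverse q)))
      = (\<Prod>i=1..m. sigma (a * inverse (x i) * y (m+1)) * sigma (a * inverse (x (m+1)) * y i))"
    unfolding prod_ops prod_ys prod.distrib Y
    by (simp add: inverse_mult_distrib mult.assoc)
  finally show ?thesis .
qed



theorem lemma18:
  fixes a :: complex and m :: nat and x y :: "nat \<Rightarrow> complex"
  assumes "m \<ge> 1" and "a \<noteq> 0"
    and "\<forall>i\<in>{1..m+1}. x i \<noteq> 0 \<and> y i \<noteq> 0"
    and "y (m+1) = a * x (m+1)"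
  shows "Z_HT_odd a m x y =
    (\<Prod>i=1..m. sigma (a * inverse (x i) * y (m+1)) * sigma (a * inverse (x (m+1)) * y i))
      * Z_HT_even a m x y"
proof -
  have m: "m \<ge> 1" using assms(1) .
  define Pf where "Pf = (\<Prod>i=1..m. sigma (a * inverse (x i) * y (m+1)) * sigma (a * inverse (x (m+1)) * y i))"
  define Pe where "Pe = (\<lambda>T. \<Sum>S\<in>Pow (gint (Suc m) m 0 m). \<Prod>v\<in>{Suc m..<Suc m + m} \<times> {0<..m}. wt a (epar m x y v) (ecfg m (T \<union> S) v))"
  have "Z_HT_odd a m x y = (\<Sum>T\<in>Pow (Itop m). topW a m x y T *
     (\<Sum>S\<in>Pow (Iol m). \<Prod>v\<in>({Suc m..<Suc m + Suc m} \<times> {0<..m}) \<union> ({m+2..<m+2+m} \<times> {m<..Suc m}).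
            wt a (opar m x y v) (ocfg m (T \<union> S) v)))"
    by (rule Z_odd_split[OF m])
  also have "\<dots> = (\<Sum>T\<in>Pow (Itop m). topW a m x y T * (Pf * Pe T))"
  proof (intro sum.cong refl arg_cong2[where f = times])
    fix T assume "T \<in> Pow (Itop m)"
    then have T: "T \<subseteq> Itop m" by simp
    show "(\<Sum>S\<in>Pow (Iol m). \<Prod>v\<in>({Suc m..<Suc m + Suc m} \<times> {0<..m}) \<union> ({m+2..<m+2+m} \<times> {m<..Suc m}).
            wt a (opar m x y v) (ocfg m (T \<union> S) v)) = Pf * Pe T"
      unfolding Pf_def Pe_def by (rule core[OF m T assms(2) assms(3) assms(4)])
  qed
  also have "\<dots> = Pf * (\<Sum>T\<in>Pow (Itop m). topW a m x y T * Pe T)"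
    by (simp add: sum_distrib_left mult_ac)
  also have "\<dots> = Pf * Z_HT_even a m x y"
    unfolding Z_even_split[OF m] Pe_def ..
  finally show ?thesis unfolding Pf_def .
qed



end
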